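(* Let $k_1=(1,0)$, $k_2=(-\tfrac12,\tfrac{\sqrt3}{2})$, $k_3=(-\tfrac12,-\tfrac{\sqrt3}{2})$, $\phi(x)=\sum_{j=1}^3\cos(k_j\cdot x)$ on $\mathbb R^2$, and for $R>0$, $\varepsilon\in\mathbb R$ define the probability density \[ F_{R,\varepsilon}(x)=Z_{R,\varepsilon}^{-1}\exp\Big(\varepsilon\phi(x)-\frac{|x|^2}{2R^2}\Big),\qquad x\in\mathbb R^2, \] with $Z_{R,\varepsilon}$ the normalizing constant. Then for each sufficiently small $\varepsilon>0$ there exists $R_0(\varepsilon)<\infty$ such that for all $R\ge R_0(\varepsilon)$, \[ \mathcal I[F_{R,\varepsilon}]\mathcal D[F_{R,\varepsilon}]-\mathcal Q[F_{R,\varepsilon}]^2<0. \]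
   Context: For a smooth positive probability density $f=e^u$ on $\mathbb R^d$ with sufficient decay, $\mathsf H_f=-\nabla^2u$ and $\mathcal I[f]=\int\operatorname{tr}(\mathsf H_f)f\,dx$, $\mathcal Q[f]=\int\operatorname{tr}(\mathsf H_f^2)f\,dx$, $\mathcal D[f]=\int(|\nabla\mathsf H_f|^2+2\operatorname{tr}(\mathsf H_f^3))f\,dx$, where $|\nabla\mathsf H_f|^2=\sum_{i,j,k}(\partial_k(\mathsf H_f)_{ij})^2$. *)

theory Defs
  imports "HOL-Analysis.Analysis"
begin

definition pd :: "'n::finite \<Rightarrow> (real^'n \<Rightarrow> real) \<Rightarrow> real^'n \<Rightarrow> real" where
  "pd i g x = deriv (\<lambda>t. g (x + t *\<^sub>R axis i 1)) 0"

definition Hf :: "(real^'n::finite \<Rightarrow> real) \<Rightarrow> 'n \<Rightarrow> 'n \<Rightarrow> real^'n \<Rightarrow> real" where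
  "Hf f i j x = - pd i (pd j (\<lambda>y. ln (f y))) x"

definition Ifun :: "(real^'n::finite \<Rightarrow> real) \<Rightarrow> real" where
  "Ifun f = (\<integral>x. (\<Sum>i\<in>UNIV. Hf f i i x) * f x \<partial>lborel)"

definition Qfun :: "(real^'n::finite \<Rightarrow> real) \<Rightarrow> real" where
  "Qfun f = (\<integral>x. (\<Sum>i\<in>UNIV. \<Sum>j\<in>UNIV. Hf f i j x * Hf f j i x) * f x \<partial>lborel)"

definition Dfun :: "(real^'n::finite \<Rightarrow> real) \<Rightarrow> real" where
  "Dfun f = (\<integral>x. ((\<Sum>i\<in>UNIV. \<Sum>j\<in>UNIV. \<Sum>k\<in>UNIV. (pd k (Hf f i j) x)\<^sup>2)
      + 2 * (\<Sum>i\<in>UNIV. \<Sum>j\<in>UNIV. \<Sum>k\<in>UNIV. Hf f i j x * Hf f j k x * Hf f k i x)) * f x \<partial>lborel)"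

definition kvec1 :: "real^2" where "kvec1 = vector [1, 0]"
definition kvec2 :: "real^2" where "kvec2 = vector [-1/2, sqrt 3 / 2]"
definition kvec3 :: "real^2" where "kvec3 = vector [-1/2, - sqrt 3 / 2]"

definition phi_hex :: "real^2 \<Rightarrow> real" where
  "phi_hex x = cos (kvec1 \<bullet> x) + cos (kvec2 \<bullet> x) + cos (kvec3 \<bullet> x)"

definition Zconst :: "real \<Rightarrow> real \<Rightarrow> real" where
  "Zconst R \<epsilon> = (\<integral>x. exp (\<epsilon> * phi_hex x - (norm x)\<^sup>2 / (2 * R\<^sup>2)) \<partial>lborel)"

definition Fdens :: "real \<Rightarrow> real \<Rightarrow> real^2 \<Rightarrow> real" where
  "Fdens R \<epsilon> x = exp (\<epsilon> * phi_hex x - (norm x)\<^sup>2 / (2 * R\<^sup>2)) / Zconst R \<epsilon>"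

end

theory Submission
  imports Defs "HOL-Probability.Characteristic_Functions" "HOL-Real_Asymp.Real_Asymp"
begin


lemma std_char_integrable:
  "integrable lborel (\<lambda>x. complex_of_real (exp (- x\<^sup>2 / 2)) * iexp (t * x))"
proof -
  interpret P: prob_space std_normal_distribution by (rule prob_space_normal_density) simp
  have "integrable std_normal_distribution (\<lambda>x. iexp (t * x))"
    by (rule P.integrable_const_bound[where B=1]) auto
  then have "integrable lborel (\<lambda>x. std_normal_density x *\<^sub>R iexp (t * x))"
    by (subst (asm) integrable_density) (auto simp: normal_density_nonneg)
  then have "integrable lborel (\<lambda>x. sqrt (2*pi) *\<^sub>R (std_normal_density x *\<^sub>R iexp (t * x)))"
    by (rule integrable_scaleR_right)
  then show ?thesis
    by (simp add: std_normal_density_def scaleR_conv_of_real)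
qed

lemma std_char_integral:
  "(\<integral>x. complex_of_real (exp (- x\<^sup>2 / 2)) * iexp (t * x) \<partial>lborel) = complex_of_real (sqrt (2*pi) * exp (- t\<^sup>2 / 2))"
proof -
  have "char std_normal_distribution t = (\<integral>x. std_normal_density x *\<^sub>R iexp (t * x) \<partial>lborel)"
    unfolding char_def by (subst integral_density) (auto simp: normal_density_nonneg)
  also have "\<dots> = (\<integral>x. complex_of_real (1 / sqrt (2*pi)) * (complex_of_real (exp (- x\<^sup>2 / 2)) * iexp (t * x)) \<partial>lborel)"
    by (simp add: std_normal_density_def scaleR_conv_of_real mult.assoc)
  also have "\<dots> = complex_of_real (1 / sqrt (2*pi)) * (\<integral>x. complex_of_real (exp (- x\<^sup>2 / 2)) * iexp (t * x) \<partial>lborel)"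
    by (rule integral_mult_right_zero)
  finally have "(\<integral>x. complex_of_real (exp (- x\<^sup>2 / 2)) * iexp (t * x) \<partial>lborel) = complex_of_real (sqrt (2*pi)) * char std_normal_distribution t"
    by (simp add: field_simps)
  then show ?thesis by (simp add: char_std_normal_distribution)
qed

lemma gauss1_eq:
  assumes R: "R > 0"
  shows "(\<lambda>x. complex_of_real (exp (- ((R * x)\<^sup>2 / (2 * R\<^sup>2)))) *
           exp (\<i> * (complex_of_real a * (complex_of_real R * complex_of_real x))))
       = (\<lambda>x. complex_of_real (exp (- x\<^sup>2 / 2)) * iexp ((a*R) * x))"
  using R by (auto simp: power_mult_distrib field_simps)

lemma gauss1_integrable:
  assumes R: "R > 0"
  shows "integrable lborel (\<lambda>y. complex_of_real (exp (- y\<^sup>2 / (2*R\<^sup>2))) * iexp (a * y))"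
  using R std_char_integrable[of "a*R"] by (subst lborel_integrable_real_affine_iff[of R _ 0, symmetric])
     (auto simp: gauss1_eq)

lemma gauss1_integral:
  assumes R: "R > 0"
  shows "(\<integral>y. complex_of_real (exp (- y\<^sup>2 / (2*R\<^sup>2))) * iexp (a * y) \<partial>lborel)
     = complex_of_real (sqrt (2*pi) * R * exp (- (a*R)\<^sup>2 / 2))"
  using R std_char_integral[of "a*R"] by (subst lborel_integral_real_affine[of R _ 0])
     (auto simp: gauss1_eq scaleR_conv_of_real)


lemma T_meas: "(\<lambda>f. \<Sum>b\<in>Basis. f b *\<^sub>R b) \<in> measurable (\<Pi>\<^sub>M b\<in>(Basis::'a::euclidean_space set). lborel) (borel :: 'a measure)"
  by measurable

lemma normT: "(norm (\<Sum>b\<in>(Basis::'a::euclidean_space set). f b *\<^sub>R b))\<^sup>2 = (\<Sum>b\<in>Basis. (f b)\<^sup>2)"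
  by (simp only: power2_norm_eq_inner) (simp add: inner_sum_left inner_sum_right inner_Basis if_distrib sum.delta power2_eq_square
      cong: if_cong)

lemma innerT: "p \<bullet> (\<Sum>b\<in>(Basis::'a::euclidean_space set). f b *\<^sub>R b) = (\<Sum>b\<in>Basis. (p \<bullet> b) * f b)"
  by (simp add: inner_sum_right mult.commute)

definition gfun :: "real \<Rightarrow> 'a::euclidean_space \<Rightarrow> 'a \<Rightarrow> complex" where
  "gfun R p x = complex_of_real (exp (- (norm x)\<^sup>2 / (2*R\<^sup>2))) * iexp (p \<bullet> x)"

lemma gfun_T: "gfun R p (\<Sum>b\<in>(Basis::'a::euclidean_space set). f b *\<^sub>R b)
   = (\<Prod>b\<in>Basis. complex_of_real (exp (- (f b)\<^sup>2 / (2*R\<^sup>2))) * iexp ((p \<bullet> b) * f b))"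
proof -
  have 1: "exp (- (\<Sum>b\<in>(Basis::'a set). (f b)\<^sup>2) / (2*R\<^sup>2)) = (\<Prod>b\<in>Basis. exp (- (f b)\<^sup>2 / (2*R\<^sup>2)))"
    by (simp add: sum_negf[symmetric] sum_divide_distrib exp_sum)
  have 2: "iexp (\<Sum>b\<in>(Basis::'a set). (p \<bullet> b) * f b) = (\<Prod>b\<in>Basis. iexp ((p \<bullet> b) * f b))"
    by (simp add: sum_distrib_left exp_sum)
  show ?thesis
    unfolding gfun_def normT innerT 1 2 by (simp add: prod.distrib)
qed

lemma gaussN:
  assumes R: "R > 0"
  shows "integrable lborel (gfun R p :: 'a::euclidean_space \<Rightarrow> complex)"
    "(\<integral>x. gfun R p x \<partial>(lborel :: 'a measure)) = complex_of_real ((sqrt (2*pi) * R) ^ DIM('a) * exp (- (norm p * R)\<^sup>2 / 2))"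
proof -
  interpret product_sigma_finite "\<lambda>_. lborel" by standard
  have meas: "gfun R p \<in> borel_measurable (borel :: 'a measure)"
    unfolding gfun_def by measurable
  have int1: "integrable (\<Pi>\<^sub>M b\<in>(Basis::'a set). lborel)
      (\<lambda>f. \<Prod>b\<in>Basis. complex_of_real (exp (- (f b)\<^sup>2 / (2*R\<^sup>2))) * iexp ((p \<bullet> b) * f b))"
    by (rule product_integrable_prod) (simp, rule gauss1_integrable[OF R])
  show "integrable lborel (gfun R p :: 'a::euclidean_space \<Rightarrow> complex)"
    apply (subst lborel_eq)
    apply (subst integrable_distr_eq[OF T_meas meas])
    using int1 by (simp add: gfun_T)
  have "(\<integral>x. gfun R p x \<partial>(lborel :: 'a measure)) = 
     (\<integral>f. (\<Prod>b\<in>(Basis::'a set). complex_of_real (exp (- (f b)\<^sup>2 / (2*R\<^sup>2))) * iexp ((p \<bullet> b) * f b)) \<partial>(\<Pi>\<^sub>M b\<in>(Basis::'a set). lborel))"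
    apply (subst lborel_eq)
    apply (subst integral_distr[OF T_meas meas])
    by (simp add: gfun_T comp_def)
  also have "\<dots> = (\<Prod>b\<in>(Basis::'a set). complex_of_real (sqrt (2*pi) * R * exp (- ((p \<bullet> b)*R)\<^sup>2 / 2)))"
    apply (subst product_integral_prod)
      apply simp
     apply (rule gauss1_integrable[OF R])
    apply (rule prod.cong[OF refl])
    apply (rule gauss1_integral[OF R])
    done
  also have "\<dots> = complex_of_real ((sqrt (2*pi) * R) ^ DIM('a) * exp (- (norm p * R)\<^sup>2 / 2))"
  proof -
    have n: "(norm p)\<^sup>2 = (\<Sum>b\<in>(Basis::'a set). (p \<bullet> b)\<^sup>2)"
      by (simp only: power2_norm_eq_inner) (subst euclidean_inner, simp add: power2_eq_square)
    have e: "(\<Sum>b\<in>(Basis::'a set). - ((p \<bullet> b)*R)\<^sup>2 / 2) = - (norm p * R)\<^sup>2 / 2"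
      by (simp add: n power_mult_distrib sum_divide_distrib[symmetric] sum_distrib_right[symmetric] sum_negf)
    have "(\<Prod>b\<in>(Basis::'a set). sqrt (2*pi) * R * exp (- ((p \<bullet> b)*R)\<^sup>2 / 2))
        = (sqrt (2*pi) * R) ^ DIM('a) * exp (\<Sum>b\<in>(Basis::'a set). - ((p \<bullet> b)*R)\<^sup>2 / 2)"
      by (simp only: prod.distrib prod_constant exp_sum[OF finite_Basis] power_mult_distrib)
    then show ?thesis unfolding e of_real_prod[symmetric] by simp
  qed
  finally show "(\<integral>x. gfun R p x \<partial>(lborel :: 'a measure)) = complex_of_real ((sqrt (2*pi) * R) ^ DIM('a) * exp (- (norm p * R)\<^sup>2 / 2))" .
qed


definition Gs :: "real \<Rightarrow> real^2 \<Rightarrow> real" where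
  "Gs R x = exp (- (norm x)\<^sup>2 / (2*R\<^sup>2))"

lemma Re_gfun: "Re (gfun R p x) = Gs R x * cos (p \<bullet> x)"
  by (simp add: gfun_def Gs_def Re_exp)

lemma gfun0: "gfun R 0 x = complex_of_real (Gs R x)"
  by (simp add: gfun_def Gs_def)

lemma gfun0': "gfun R (0::real^2) = (\<lambda>x. complex_of_real (Gs R x))"
  by (rule ext) (simp add: gfun0)

lemma Gs_integrable: "R > 0 \<Longrightarrow> integrable lborel (Gs R)"
  using integrable_Re[OF gaussN(1)[of R "0::real^2"]] by (simp add: gfun0')

lemma Gs_integral: "R > 0 \<Longrightarrow> (\<integral>x. Gs R x \<partial>lborel) = 2*pi*R\<^sup>2"
proof -
  assume R: "R > 0"
  have "complex_of_real (\<integral>x. Gs R x \<partial>lborel) = complex_of_real (2*pi*R\<^sup>2)"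
    using gaussN(2)[OF R, of "0::real^2"] by (simp add: gfun0' power_mult_distrib)
  then show ?thesis by (simp only: of_real_eq_iff)
qed

lemma Gs_cos_integral: "R > 0 \<Longrightarrow> (\<integral>x. Gs R x * cos (p \<bullet> x) \<partial>lborel) = 2*pi*R\<^sup>2 * exp (- (norm p * R)\<^sup>2 / 2)"
proof -
  assume R: "R > 0"
  have "(\<integral>x. Gs R x * cos (p \<bullet> x) \<partial>lborel) = (\<integral>x. Re (gfun R p x) \<partial>lborel)"
    by (simp add: Re_gfun)
  also have "\<dots> = Re (\<integral>x. gfun R p x \<partial>lborel)"
    by (rule integral_Re[OF gaussN(1)[OF R]])
  also have "\<dots> = 2*pi*R\<^sup>2 * exp (- (norm p * R)\<^sup>2 / 2)"
    by (simp add: gaussN(2)[OF R] power_mult_distrib)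
  finally show ?thesis .
qed

lemma Gs_pos: "Gs R x > 0" by (simp add: Gs_def)

lemma bdd_integrable:
  assumes R: "R > 0" and m: "h \<in> borel_measurable lborel" and b: "\<And>x. \<bar>h x\<bar> \<le> B"
  shows "integrable lborel (\<lambda>x. h x * Gs R x)"
proof (rule Bochner_Integration.integrable_bound[OF integrable_mult_right[OF Gs_integrable[OF R], of B]])
  show "(\<lambda>x. h x * Gs R x) \<in> borel_measurable lborel" using m unfolding Gs_def by measurable
  show "AE x in lborel. norm (h x * Gs R x) \<le> norm (B * Gs R x)"
  proof (rule AE_I2)
    fix x
    have "\<bar>h x\<bar> \<le> \<bar>B\<bar>" using b[of x] by linarith
    then show "norm (h x * Gs R x) \<le> norm (B * Gs R x)"
      using Gs_pos[of R x] by (simp add: abs_mult mult_right_mono)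
  qed
qed


definition EE :: "real \<Rightarrow> (real^2 \<Rightarrow> real) \<Rightarrow> real" where
  "EE R h = (\<integral>x. h x * Gs R x \<partial>lborel) / (2*pi*R\<^sup>2)"

definition bm :: "(real^2 \<Rightarrow> real) \<Rightarrow> bool" where
  "bm h \<longleftrightarrow> h \<in> borel_measurable lborel \<and> (\<exists>B. \<forall>x. \<bar>h x\<bar> \<le> B)"

lemma bm_integrable: "R > 0 \<Longrightarrow> bm h \<Longrightarrow> integrable lborel (\<lambda>x. h x * Gs R x)"
  unfolding bm_def using bdd_integrable by blast

lemma bm_add[intro]: "bm f \<Longrightarrow> bm g \<Longrightarrow> bm (\<lambda>x. f x + g x)"
  unfolding bm_def
proof (elim conjE exE, intro conjI)
  fix B C assume "\<forall>x. \<bar>f x\<bar> \<le> B" "\<forall>x. \<bar>g x\<bar> \<le> C"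
  then show "\<exists>B. \<forall>x. \<bar>f x + g x\<bar> \<le> B"
  proof (intro exI[of _ "B + C"] allI)
    fix x show "\<bar>f x + g x\<bar> \<le> B + C"
      using abs_triangle_ineq[of "f x" "g x"] \<open>\<forall>x. \<bar>f x\<bar> \<le> B\<close> \<open>\<forall>x. \<bar>g x\<bar> \<le> C\<close>
      by (meson add_mono order_trans)
  qed
qed auto

lemma bm_mult[intro]: "bm f \<Longrightarrow> bm g \<Longrightarrow> bm (\<lambda>x. f x * g x)"
  unfolding bm_def
proof (elim conjE exE, intro conjI)
  fix B C assume b: "\<forall>x. \<bar>f x\<bar> \<le> B" "\<forall>x. \<bar>g x\<bar> \<le> C"
  show "\<exists>B. \<forall>x. \<bar>f x * g x\<bar> \<le> B"
  proof (intro exI[of _ "B * C"] allI)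
    fix x
    have h1: "\<bar>f x\<bar> \<le> B" and h2: "\<bar>g x\<bar> \<le> C" using b by auto
    have "0 \<le> B" using h1 abs_ge_zero[of "f x"] by linarith
    then show "\<bar>f x * g x\<bar> \<le> B * C"
      unfolding abs_mult using mult_mono[OF h1 h2 _ abs_ge_zero] by blast
  qed
qed auto

lemma bm_const[intro]: "bm (\<lambda>x. c)"
  unfolding bm_def by auto

lemma bm_cos[intro]: "bm (\<lambda>x. cos (p \<bullet> x))"
  unfolding bm_def by (auto intro!: exI[of _ 1])

lemma bm_sin[intro]: "bm (\<lambda>x. sin (p \<bullet> x))"
  unfolding bm_def by (auto intro!: exI[of _ 1])

lemma bm_sum[intro]: "(\<And>i. i \<in> I \<Longrightarrow> bm (f i)) \<Longrightarrow> bm (\<lambda>x. \<Sum>i\<in>I. f i x)"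
proof (induction I rule: infinite_finite_induct)
  case (infinite A) then show ?case by (simp add: bm_const)
next
  case empty then show ?case by (simp add: bm_const)
next
  case (insert i A) then show ?case by (simp add: bm_add)
qed

lemma EE_add: "R > 0 \<Longrightarrow> bm f \<Longrightarrow> bm g \<Longrightarrow> EE R (\<lambda>x. f x + g x) = EE R f + EE R g"
  unfolding EE_def by (simp add: distrib_right bm_integrable add_divide_distrib)

lemma EE_diff: "R > 0 \<Longrightarrow> bm f \<Longrightarrow> bm g \<Longrightarrow> EE R (\<lambda>x. f x - g x) = EE R f - EE R g"
  unfolding EE_def by (simp add: left_diff_distrib bm_integrable diff_divide_distrib)

lemma EE_cmult: "EE R (\<lambda>x. c * f x) = c * EE R f"
  unfolding EE_def by (simp add: mult.assoc)

lemma EE_sum: "R > 0 \<Longrightarrow> (\<And>i. i \<in> I \<Longrightarrow> bm (f i)) \<Longrightarrow> EE R (\<lambda>x. \<Sum>i\<in>I. f i x) = (\<Sum>i\<in>I. EE R (f i))"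
proof (induction I rule: infinite_finite_induct)
  case (infinite A) then show ?case by (simp add: EE_def)
next
  case empty then show ?case by (simp add: EE_def)
next
  case (insert i A) then show ?case by (simp add: EE_add bm_sum)
qed

lemma EE_one: "R > 0 \<Longrightarrow> EE R (\<lambda>x. 1) = 1"
  unfolding EE_def by (simp add: Gs_integral)

lemma EE_cos: "R > 0 \<Longrightarrow> EE R (\<lambda>x. cos (p \<bullet> x)) = exp (- (norm p * R)\<^sup>2 / 2)"
  unfolding EE_def by (simp add: Gs_cos_integral mult.commute)

lemma EE_bound:
  assumes R: "R > 0" and m: "h \<in> borel_measurable lborel" and b: "\<And>x. \<bar>h x\<bar> \<le> B"
  shows "\<bar>EE R h\<bar> \<le> B"
proof -
  have i: "integrable lborel (\<lambda>x. h x * Gs R x)" using bdd_integrable[OF R m b] .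
  have "\<bar>\<integral>x. h x * Gs R x \<partial>lborel\<bar> \<le> (\<integral>x. B * Gs R x \<partial>lborel)"
  proof -
    have "\<bar>\<integral>x. h x * Gs R x \<partial>lborel\<bar> \<le> (\<integral>x. \<bar>h x * Gs R x\<bar> \<partial>lborel)"
      by (rule integral_abs_bound)
    also have "\<dots> \<le> (\<integral>x. B * Gs R x \<partial>lborel)"
    proof (rule integral_mono)
      show "integrable lborel (\<lambda>x. \<bar>h x * Gs R x\<bar>)" using i by auto
      show "integrable lborel (\<lambda>x. B * Gs R x)" using Gs_integrable[OF R] by auto
      fix x show "\<bar>h x * Gs R x\<bar> \<le> B * Gs R x"
        using b[of x] Gs_pos[of R x] by (simp add: abs_mult mult_right_mono)
    qed
    finally show ?thesis .
  qed
  also have "\<dots> = B * (2*pi*R\<^sup>2)" using Gs_integral[OF R] by simp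
  finally show ?thesis unfolding EE_def using R by (simp add: abs_div pos_divide_le_eq)
qed

definition ind :: "real^2 \<Rightarrow> real" where "ind p = (if p = 0 then 1 else 0)"

lemma lim_cos: "((\<lambda>R. EE R (\<lambda>x. cos (p \<bullet> x))) \<longlongrightarrow> ind p) at_top"
proof -
  have ev: "eventually (\<lambda>R. exp (- (norm p * R)\<^sup>2 / 2) = EE R (\<lambda>x. cos (p \<bullet> x))) at_top"
    using eventually_gt_at_top[of 0] by eventually_elim (simp add: EE_cos)
  show ?thesis
  proof (cases "p = 0")
    case True
    have "eventually (\<lambda>R. EE R (\<lambda>x. cos (p \<bullet> x)) = 1) at_top"
      using eventually_gt_at_top[of 0] by eventually_elim (simp add: True EE_one)
    then show ?thesis using True unfolding ind_def by (simp add: tendsto_eventually)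
  next
    case False
    then have "norm p > 0" by simp
    have "((\<lambda>R. exp (- (norm p * R)\<^sup>2 / 2)) \<longlongrightarrow> 0) at_top"
      using \<open>norm p > 0\<close> by real_asymp
    then show ?thesis using False by (simp add: ind_def tendsto_cong[OF ev, symmetric])
  qed
qed


lemma ccc_eq: "cos (a::real) * cos b * cos c = (cos (a+b+c) + cos (a+b-c) + cos (a-b+c) + cos (a-b-c)) / 4"
  by (simp add: cos_add cos_diff sin_add sin_diff algebra_simps)

lemma ssc_eq: "sin (a::real) * sin b * cos c = (cos (a-b+c) + cos (a-b-c) - cos (a+b+c) - cos (a+b-c)) / 4"
  by (simp add: cos_add cos_diff sin_add sin_diff algebra_simps)

lemma bm_diff[intro]: "bm f \<Longrightarrow> bm g \<Longrightarrow> bm (\<lambda>x. f x - g x)"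
  using bm_add[of f "\<lambda>x. (-1) * g x"] bm_mult[of "\<lambda>x. -1" g] bm_const by simp

lemma lim_EE_add:
  assumes "bm f" "bm g" "((\<lambda>R. EE R f) \<longlongrightarrow> a) at_top" "((\<lambda>R. EE R g) \<longlongrightarrow> b) at_top"
  shows "((\<lambda>R. EE R (\<lambda>x. f x + g x)) \<longlongrightarrow> a + b) at_top"
proof -
  have "eventually (\<lambda>R. EE R f + EE R g = EE R (\<lambda>x. f x + g x)) at_top"
    using eventually_gt_at_top[of 0] by eventually_elim (simp add: EE_add assms)
  from tendsto_cong[OF this] show ?thesis using tendsto_add[OF assms(3,4)] by simp
qed

lemma lim_EE_diff:
  assumes "bm f" "bm g" "((\<lambda>R. EE R f) \<longlongrightarrow> a) at_top" "((\<lambda>R. EE R g) \<longlongrightarrow> b) at_top"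
  shows "((\<lambda>R. EE R (\<lambda>x. f x - g x)) \<longlongrightarrow> a - b) at_top"
proof -
  have "eventually (\<lambda>R. EE R f - EE R g = EE R (\<lambda>x. f x - g x)) at_top"
    using eventually_gt_at_top[of 0] by eventually_elim (simp add: EE_diff assms)
  from tendsto_cong[OF this] show ?thesis using tendsto_diff[OF assms(3,4)] by simp
qed

lemma lim_EE_cmult:
  assumes "((\<lambda>R. EE R f) \<longlongrightarrow> a) at_top"
  shows "((\<lambda>R. EE R (\<lambda>x. c * f x)) \<longlongrightarrow> c * a) at_top"
  unfolding EE_cmult by (rule tendsto_mult_left[OF assms])

lemma lim_EE_sum:
  assumes "finite I" "\<And>i. i \<in> I \<Longrightarrow> bm (f i)" "\<And>i. i \<in> I \<Longrightarrow> ((\<lambda>R. EE R (f i)) \<longlongrightarrow> L i) at_top"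
  shows "((\<lambda>R. EE R (\<lambda>x. \<Sum>i\<in>I. f i x)) \<longlongrightarrow> (\<Sum>i\<in>I. L i)) at_top"
proof -
  have "eventually (\<lambda>R. (\<Sum>i\<in>I. EE R (f i)) = EE R (\<lambda>x. \<Sum>i\<in>I. f i x)) at_top"
    using eventually_gt_at_top[of 0] by eventually_elim (simp add: EE_sum assms)
  from tendsto_cong[OF this] tendsto_sum[of I "\<lambda>i R. EE R (f i)" L at_top] assms(3) show ?thesis by simp
qed

lemma lim_ccc:
  "((\<lambda>R. EE R (\<lambda>x. cos (a \<bullet> x) * cos (b \<bullet> x) * cos (c \<bullet> x))) \<longlongrightarrow>
     (ind (a+b+c) + ind (a+b-c) + ind (a-b+c) + ind (a-b-c)) / 4) at_top"
proof -
  have e: "(\<lambda>x. cos (a \<bullet> x) * cos (b \<bullet> x) * cos (c \<bullet> x)) =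
     (\<lambda>x. (1/4) * (((cos ((a+b+c) \<bullet> x) + cos ((a+b-c) \<bullet> x)) + cos ((a-b+c) \<bullet> x)) + cos ((a-b-c) \<bullet> x)))"
    by (rule ext) (simp add: ccc_eq inner_add_left inner_diff_left)
  have "((\<lambda>R. EE R (\<lambda>x. ((cos ((a+b+c) \<bullet> x) + cos ((a+b-c) \<bullet> x)) + cos ((a-b+c) \<bullet> x)) + cos ((a-b-c) \<bullet> x)))
     \<longlongrightarrow> ((ind (a+b+c) + ind (a+b-c)) + ind (a-b+c)) + ind (a-b-c)) at_top"
    by (intro lim_EE_add lim_cos bm_add bm_cos)
  from lim_EE_cmult[OF this, of "1/4"] show ?thesis unfolding e by simp
qed

lemma lim_ssc:
  "((\<lambda>R. EE R (\<lambda>x. sin (a \<bullet> x) * sin (b \<bullet> x) * cos (c \<bullet> x))) \<longlongrightarrow>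
     (ind (a-b+c) + ind (a-b-c) - ind (a+b+c) - ind (a+b-c)) / 4) at_top"
proof -
  have e: "(\<lambda>x. sin (a \<bullet> x) * sin (b \<bullet> x) * cos (c \<bullet> x)) =
     (\<lambda>x. (1/4) * (((cos ((a-b+c) \<bullet> x) + cos ((a-b-c) \<bullet> x)) - cos ((a+b+c) \<bullet> x)) - cos ((a+b-c) \<bullet> x)))"
    by (rule ext) (simp add: ssc_eq inner_add_left inner_diff_left)
  have "((\<lambda>R. EE R (\<lambda>x. ((cos ((a-b+c) \<bullet> x) + cos ((a-b-c) \<bullet> x)) - cos ((a+b+c) \<bullet> x)) - cos ((a+b-c) \<bullet> x)))
     \<longlongrightarrow> ((ind (a-b+c) + ind (a-b-c)) - ind (a+b+c)) - ind (a+b-c)) at_top"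
    by (intro lim_EE_add lim_EE_diff lim_cos bm_add bm_diff bm_cos)
  from lim_EE_cmult[OF this, of "1/4"] show ?thesis unfolding e by simp
qed


definition kk :: "nat \<Rightarrow> real^2" where
  "kk i = (if i = 0 then kvec1 else if i = 1 then kvec2 else kvec3)"
definition cc :: "nat \<Rightarrow> real^2 \<Rightarrow> real" where "cc i x = cos (kk i \<bullet> x)"
definition ss :: "nat \<Rightarrow> real^2 \<Rightarrow> real" where "ss i x = sin (kk i \<bullet> x)"
definition gg :: "nat \<Rightarrow> nat \<Rightarrow> real" where "gg i j = kk i \<bullet> kk j"

lemma kcomp[simp]:
  "kvec1 $ 1 = 1" "kvec1 $ 2 = 0" "kvec2 $ 1 = -1/2" "kvec2 $ 2 = sqrt 3 / 2"
  "kvec3 $ 1 = -1/2" "kvec3 $ 2 = - sqrt 3 / 2"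
  by (simp_all add: kvec1_def kvec2_def kvec3_def)

lemma kk_simps[simp]: "kk 0 = kvec1" "kk (Suc 0) = kvec2" "kk 1 = kvec2" "kk 2 = kvec3"
  by (simp_all add: kk_def)

lemma ind_eq: "ind v = (if v $ 1 = 0 \<and> v $ 2 = 0 then 1 else 0)"
  by (simp add: ind_def vec_eq_iff forall_2)

lemma inner2: "(x::real^2) \<bullet> y = x$1 * y$1 + x$2 * y$2"
  by (simp add: inner_vec_def sum_2)

lemma sum3: "(\<Sum>i<(3::nat). f i) = f 0 + f 1 + f 2"
  by (simp add: numeral_3_eq_3 numeral_2_eq_2 lessThan_Suc add_ac)

lemma bm_cc[intro]: "bm (cc i)" unfolding cc_def[abs_def] by (rule bm_cos)
lemma bm_ss[intro]: "bm (ss i)" unfolding ss_def[abs_def] by (rule bm_sin)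

lemma lim_sum3_ccc:
  "((\<lambda>R. EE R (\<lambda>x. \<Sum>i<3. \<Sum>j<3. \<Sum>l<3. w i j l * (cc i x * cc j x * cc l x))) \<longlongrightarrow>
    (\<Sum>i<3. \<Sum>j<3. \<Sum>l<3. w i j l * ((ind (kk i+kk j+kk l) + ind (kk i+kk j-kk l) + ind (kk i-kk j+kk l) + ind (kk i-kk j-kk l)) / 4))) at_top"
  unfolding cc_def
  by (intro lim_EE_sum lim_EE_cmult lim_ccc bm_sum bm_mult bm_cos bm_const finite_lessThan)

lemma lim_sum3_ssc:
  "((\<lambda>R. EE R (\<lambda>x. \<Sum>i<3. \<Sum>j<3. \<Sum>l<3. w i j l * (ss i x * ss j x * cc l x))) \<longlongrightarrow>
    (\<Sum>i<3. \<Sum>j<3. \<Sum>l<3. w i j l * ((ind (kk i-kk j+kk l) + ind (kk i-kk j-kk l) - ind (kk i+kk j+kk l) - ind (kk i+kk j-kk l)) / 4))) at_top"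
  unfolding cc_def ss_def
  by (intro lim_EE_sum lim_EE_cmult lim_ssc bm_sum bm_mult bm_cos bm_sin bm_const finite_lessThan)

lemma lim_sum2_cc:
  "((\<lambda>R. EE R (\<lambda>x. \<Sum>i<3. \<Sum>j<3. w i j * (cc i x * cc j x))) \<longlongrightarrow>
    (\<Sum>i<3. \<Sum>j<3. w i j * ((ind (kk i+kk j+0) + ind (kk i+kk j-0) + ind (kk i-kk j+0) + ind (kk i-kk j-0)) / 4))) at_top"
proof -
  have "((\<lambda>R. EE R (\<lambda>x. \<Sum>i<3. \<Sum>j<3. w i j * (cos (kk i \<bullet> x) * cos (kk j \<bullet> x) * cos (0 \<bullet> x)))) \<longlongrightarrow>
    (\<Sum>i<3. \<Sum>j<3. w i j * ((ind (kk i+kk j+0) + ind (kk i+kk j-0) + ind (kk i-kk j+0) + ind (kk i-kk j-0)) / 4))) at_top"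
    by (intro lim_EE_sum lim_EE_cmult lim_ccc bm_sum bm_mult bm_cos bm_const finite_lessThan)
  then show ?thesis unfolding cc_def by simp
qed

lemma lim_sum2_ss:
  "((\<lambda>R. EE R (\<lambda>x. \<Sum>i<3. \<Sum>j<3. w i j * (ss i x * ss j x))) \<longlongrightarrow>
    (\<Sum>i<3. \<Sum>j<3. w i j * ((ind (kk i-kk j+0) + ind (kk i-kk j-0) - ind (kk i+kk j+0) - ind (kk i+kk j-0)) / 4))) at_top"
proof -
  have "((\<lambda>R. EE R (\<lambda>x. \<Sum>i<3. \<Sum>j<3. w i j * (sin (kk i \<bullet> x) * sin (kk j \<bullet> x) * cos (0 \<bullet> x)))) \<longlongrightarrow>
    (\<Sum>i<3. \<Sum>j<3. w i j * ((ind (kk i-kk j+0) + ind (kk i-kk j-0) - ind (kk i+kk j+0) - ind (kk i+kk j-0)) / 4))) at_top"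
    by (intro lim_EE_sum lim_EE_cmult lim_ssc bm_sum bm_mult bm_cos bm_sin bm_const finite_lessThan)
  then show ?thesis unfolding ss_def by simp
qed

lemma lim_sum1_c:
  "((\<lambda>R. EE R (\<lambda>x. \<Sum>i<3. cc i x)) \<longlongrightarrow> (\<Sum>i<3. ind (kk i))) at_top"
  unfolding cc_def by (intro lim_EE_sum lim_cos bm_cos finite_lessThan)

lemma gg_simps[simp]:
  "gg 0 0 = 1" "gg 1 1 = 1" "gg 2 2 = 1"
  "gg 0 1 = -1/2" "gg 1 0 = -1/2" "gg 0 2 = -1/2" "gg 2 0 = -1/2" "gg 1 2 = -1/2" "gg 2 1 = -1/2"
  "gg (Suc 0) (Suc 0) = 1" "gg 0 (Suc 0) = -1/2" "gg (Suc 0) 0 = -1/2" "gg (Suc 0) 2 = -1/2" "gg 2 (Suc 0) = -1/2"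
  by (simp_all add: gg_def inner2 power2_eq_square[symmetric] field_simps)

definition PHI :: "real^2 \<Rightarrow> real" where "PHI x = (\<Sum>i<3. cc i x)"
definition TA2 :: "real^2 \<Rightarrow> real" where "TA2 x = (\<Sum>i<3. \<Sum>j<3. (gg i j)\<^sup>2 * (cc i x * cc j x))"
definition DA2 :: "real^2 \<Rightarrow> real" where "DA2 x = (\<Sum>i<3. \<Sum>j<3. (gg i j)^3 * (ss i x * ss j x))"
definition TA3 :: "real^2 \<Rightarrow> real" where
  "TA3 x = (\<Sum>i<3. \<Sum>j<3. \<Sum>l<3. (gg i j * gg j l * gg l i) * (cc i x * cc j x * cc l x))"

lemma PHI2_eq: "PHI x * PHI x = (\<Sum>i<3. \<Sum>j<3. 1 * (cc i x * cc j x))"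
  unfolding PHI_def by (simp add: sum_product)
lemma PHI3_eq: "PHI x * PHI x * PHI x = (\<Sum>i<3. \<Sum>j<3. \<Sum>l<3. 1 * (cc i x * cc j x * cc l x))"
  unfolding PHI2_eq unfolding PHI_def by (simp only: sum_distrib_right) (simp only: sum_distrib_left mult.assoc)
lemma TA2PHI_eq: "TA2 x * PHI x = (\<Sum>i<3. \<Sum>j<3. \<Sum>l<3. (gg i j)\<^sup>2 * (cc i x * cc j x * cc l x))"
  unfolding PHI_def TA2_def by (simp only: sum_distrib_right) (simp only: sum_distrib_left mult.assoc)
lemma DA2PHI_eq: "DA2 x * PHI x = (\<Sum>i<3. \<Sum>j<3. \<Sum>l<3. (gg i j)^3 * (ss i x * ss j x * cc l x))"
  unfolding PHI_def DA2_def by (simp only: sum_distrib_right) (simp only: sum_distrib_left mult.assoc)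

lemma lim_PHI: "((\<lambda>R. EE R PHI) \<longlongrightarrow> 0) at_top"
proof -
  have "PHI = (\<lambda>x. \<Sum>i<3. cc i x)" by (rule ext) (simp add: PHI_def)
  with lim_sum1_c show ?thesis by (simp add: sum3 ind_eq)
qed

lemma lim_PHI2: "((\<lambda>R. EE R (\<lambda>x. PHI x * PHI x)) \<longlongrightarrow> 3/2) at_top"
proof -
  have V: "(\<Sum>i<3. \<Sum>j<3. 1 * ((ind (kk i+kk j+0) + ind (kk i+kk j-0) + ind (kk i-kk j+0) + ind (kk i-kk j-0)) / 4)) = (3/2::real)"
    by (simp add: sum3 ind_eq)
  show ?thesis unfolding PHI2_eq using lim_sum2_cc[of "\<lambda>i j. 1"] unfolding V .
qed

lemma lim_PHI3: "((\<lambda>R. EE R (\<lambda>x. PHI x * PHI x * PHI x)) \<longlongrightarrow> 3/2) at_top"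
proof -
  have V: "(\<Sum>i<3. \<Sum>j<3. \<Sum>l<3. 1 * ((ind (kk i+kk j+kk l) + ind (kk i+kk j-kk l) + ind (kk i-kk j+kk l) + ind (kk i-kk j-kk l)) / 4)) = (3/2::real)"
    by (simp add: sum3 ind_eq)
  show ?thesis unfolding PHI3_eq using lim_sum3_ccc[of "\<lambda>i j l. 1"] unfolding V .
qed

lemma lim_TA2: "((\<lambda>R. EE R TA2) \<longlongrightarrow> 3/2) at_top"
proof -
  have e: "TA2 = (\<lambda>x. \<Sum>i<3. \<Sum>j<3. (gg i j)\<^sup>2 * (cc i x * cc j x))" by (rule ext) (simp add: TA2_def)
  have V: "(\<Sum>i<3. \<Sum>j<3. (gg i j)\<^sup>2 * ((ind (kk i+kk j+0) + ind (kk i+kk j-0) + ind (kk i-kk j+0) + ind (kk i-kk j-0)) / 4)) = (3/2::real)"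
    by (simp add: sum3 ind_eq power2_eq_square)
  show ?thesis unfolding e using lim_sum2_cc[of "\<lambda>i j. (gg i j)\<^sup>2"] unfolding V .
qed

lemma lim_TA2PHI: "((\<lambda>R. EE R (\<lambda>x. TA2 x * PHI x)) \<longlongrightarrow> 3/8) at_top"
proof -
  have V: "(\<Sum>i<3. \<Sum>j<3. \<Sum>l<3. (gg i j)\<^sup>2 * ((ind (kk i+kk j+kk l) + ind (kk i+kk j-kk l) + ind (kk i-kk j+kk l) + ind (kk i-kk j-kk l)) / 4)) = (3/8::real)"
    by (simp add: sum3 ind_eq power2_eq_square)
  show ?thesis unfolding TA2PHI_eq using lim_sum3_ccc[of "\<lambda>i j l. (gg i j)\<^sup>2"] unfolding V .
qed

lemma lim_DA2: "((\<lambda>R. EE R DA2) \<longlongrightarrow> 3/2) at_top"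
proof -
  have e: "DA2 = (\<lambda>x. \<Sum>i<3. \<Sum>j<3. (gg i j)^3 * (ss i x * ss j x))" by (rule ext) (simp add: DA2_def)
  have V: "(\<Sum>i<3. \<Sum>j<3. (gg i j)^3 * ((ind (kk i-kk j+0) + ind (kk i-kk j-0) - ind (kk i+kk j+0) - ind (kk i+kk j-0)) / 4)) = (3/2::real)"
    by (simp add: sum3 ind_eq power3_eq_cube)
  show ?thesis unfolding e using lim_sum2_ss[of "\<lambda>i j. (gg i j)^3"] unfolding V .
qed

lemma lim_DA2PHI: "((\<lambda>R. EE R (\<lambda>x. DA2 x * PHI x)) \<longlongrightarrow> 3/16) at_top"
proof -
  have V: "(\<Sum>i<3. \<Sum>j<3. \<Sum>l<3. (gg i j)^3 * ((ind (kk i-kk j+kk l) + ind (kk i-kk j-kk l) - ind (kk i+kk j+kk l) - ind (kk i+kk j-kk l)) / 4)) = (3/16::real)"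
    by (simp add: sum3 ind_eq power3_eq_cube)
  show ?thesis unfolding DA2PHI_eq using lim_sum3_ssc[of "\<lambda>i j l. (gg i j)^3"] unfolding V .
qed

lemma lim_TA3: "((\<lambda>R. EE R TA3) \<longlongrightarrow> -3/16) at_top"
proof -
  have e: "TA3 = (\<lambda>x. \<Sum>i<3. \<Sum>j<3. \<Sum>l<3. (gg i j * gg j l * gg l i) * (cc i x * cc j x * cc l x))"
    by (rule ext) (simp add: TA3_def)
  have V: "(\<Sum>i<3. \<Sum>j<3. \<Sum>l<3. (gg i j * gg j l * gg l i) * ((ind (kk i+kk j+kk l) + ind (kk i+kk j-kk l) + ind (kk i-kk j+kk l) + ind (kk i-kk j-kk l)) / 4)) = (-3/16::real)"
    by (simp add: sum3 ind_eq)
  show ?thesis unfolding e using lim_sum3_ccc[of "\<lambda>i j l. gg i j * gg j l * gg l i"] unfolding V .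
qed



lemma s3: "sqrt 3 * sqrt 3 = (3::real)" by simp
lemma s3': "sqrt 3 * (sqrt 3 * x) = 3 * (x::real)" by (simp add: mult.assoc[symmetric])

definition Hx :: "real \<Rightarrow> real \<Rightarrow> real^2 \<Rightarrow> 2 \<Rightarrow> 2 \<Rightarrow> real" where
  "Hx \<epsilon> \<rho> x i j = (\<Sum>m<3. \<epsilon> * (kk m $ i * kk m $ j) * cc m x) + (if i = j then \<rho> else 0)"

lemma Q_id: "(\<Sum>i\<in>UNIV. \<Sum>j\<in>UNIV. Hx \<epsilon> \<rho> x i j * Hx \<epsilon> \<rho> x j i) = \<epsilon>\<^sup>2 * TA2 x + 2*\<epsilon>*\<rho> * PHI x + 2*\<rho>\<^sup>2"
  unfolding Hx_def TA2_def PHI_def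
  by (simp add: sum_2 sum3 power2_eq_square algebra_simps s3 s3')


lemma I_id: "(\<Sum>i\<in>UNIV. Hx \<epsilon> \<rho> x i i) = \<epsilon> * PHI x + 2*\<rho>"
  unfolding Hx_def PHI_def
  by (simp add: sum_2 sum3 power2_eq_square algebra_simps s3 s3')

definition dHx :: "real \<Rightarrow> real^2 \<Rightarrow> 2 \<Rightarrow> 2 \<Rightarrow> 2 \<Rightarrow> real" where
  "dHx \<epsilon> x k i j = (\<Sum>m<3. - \<epsilon> * (kk m $ i * kk m $ j * kk m $ k) * ss m x)"

lemma D1_id: "(\<Sum>i\<in>UNIV. \<Sum>j\<in>UNIV. \<Sum>k\<in>UNIV. (dHx \<epsilon> x k i j)\<^sup>2) = \<epsilon>\<^sup>2 * DA2 x"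
  unfolding dHx_def DA2_def
  by (simp add: sum_2 sum3 power2_eq_square power3_eq_cube algebra_simps s3 s3')

lemma D2_id: "(\<Sum>i\<in>UNIV. \<Sum>j\<in>UNIV. \<Sum>k\<in>UNIV. Hx \<epsilon> \<rho> x i j * Hx \<epsilon> \<rho> x j k * Hx \<epsilon> \<rho> x k i)
   = \<epsilon>^3 * TA3 x + 3*\<epsilon>\<^sup>2*\<rho> * TA2 x + 3*\<epsilon>*\<rho>\<^sup>2 * PHI x + 2*\<rho>^3"
  unfolding Hx_def TA3_def TA2_def PHI_def
  by (simp add: sum_2 sum3 power2_eq_square power3_eq_cube algebra_simps s3 s3')


lemma pd_hd:
  assumes "(g has_derivative g') (at x)"
  shows "pd i g x = g' (axis i 1)"
proof -
  let ?v = "axis i (1::real) :: real^'a"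
  have l: "linear g'" using assms by (rule has_derivative_linear)
  have "((\<lambda>t::real. x + t *\<^sub>R ?v) has_derivative (\<lambda>t. t *\<^sub>R ?v)) (at 0)"
    by (auto intro!: derivative_eq_intros)
  moreover have "(g has_derivative g') (at (x + 0 *\<^sub>R ?v))" using assms by simp
  ultimately have "((\<lambda>t. g (x + t *\<^sub>R ?v)) has_derivative (\<lambda>t. g' (t *\<^sub>R ?v))) (at 0)"
    using diff_chain_at[of "\<lambda>t::real. x + t *\<^sub>R ?v" "\<lambda>t. t *\<^sub>R ?v" 0 g g'] by (simp add: o_def)
  moreover have "(\<lambda>t. g' (t *\<^sub>R ?v)) = (*) (g' ?v)"
    using l by (auto simp add: linear_scale mult.commute)
  ultimately have "((\<lambda>t. g (x + t *\<^sub>R ?v)) has_field_derivative g' ?v) (at 0)"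
    by (simp add: has_field_derivative_def)
  then show ?thesis unfolding pd_def by (rule DERIV_imp_deriv)
qed

lemma hd_L: "((\<lambda>y. \<epsilon> * (\<Sum>m<3. cos (kk m \<bullet> y)) - q * (y \<bullet> y) - c) has_derivative
   (\<lambda>v. \<epsilon> * (\<Sum>m<3. - (kk m \<bullet> v * sin (kk m \<bullet> y))) - q * (y \<bullet> v + v \<bullet> y))) (at y)"
  by (auto intro!: derivative_eq_intros)

lemma hd_P: "((\<lambda>y. (\<Sum>m<3. a m * sin (kk m \<bullet> y)) - q * (y \<bullet> w)) has_derivative
   (\<lambda>v. (\<Sum>m<3. a m * (kk m \<bullet> v * cos (kk m \<bullet> y))) - q * (v \<bullet> w))) (at y)"
  by (auto intro!: derivative_eq_intros)

lemma hd_H: "((\<lambda>y. (\<Sum>m<3. a m * cos (kk m \<bullet> y)) + c) has_derivative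
   (\<lambda>v. (\<Sum>m<3. a m * - (kk m \<bullet> v * sin (kk m \<bullet> y))))) (at y)"
  by (auto intro!: derivative_eq_intros)

lemma pd_L: "pd j (\<lambda>y. \<epsilon> * (\<Sum>m<3. cos (kk m \<bullet> y)) - q * (y \<bullet> y) - c)
   = (\<lambda>y. (\<Sum>m<3. (- \<epsilon> * kk m $ j) * sin (kk m \<bullet> y)) - (2*q) * (y \<bullet> axis j 1))"
proof
  fix y
  show "pd j (\<lambda>y. \<epsilon> * (\<Sum>m<3. cos (kk m \<bullet> y)) - q * (y \<bullet> y) - c) y
     = (\<Sum>m<3. (- \<epsilon> * kk m $ j) * sin (kk m \<bullet> y)) - (2*q) * (y \<bullet> axis j 1)"
    unfolding pd_hd[OF hd_L]
    by (simp add: inner_axis inner_commute sum_distrib_left sum_negf algebra_simps)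
qed

lemma axis_neq: "i \<noteq> j \<Longrightarrow> axis i (1::real) $ j = 0" by (simp add: axis_def)

lemma pd_P: "pd i (\<lambda>y. (\<Sum>m<3. (- \<epsilon> * kk m $ j) * sin (kk m \<bullet> y)) - q * (y \<bullet> axis j 1))
   = (\<lambda>y. - ((\<Sum>m<3. \<epsilon> * (kk m $ i * kk m $ j) * cos (kk m \<bullet> y)) + (if i = j then q else 0)))"
proof
  fix y
  show "pd i (\<lambda>y. (\<Sum>m<3. (- \<epsilon> * kk m $ j) * sin (kk m \<bullet> y)) - q * (y \<bullet> axis j 1)) y
     = - ((\<Sum>m<3. \<epsilon> * (kk m $ i * kk m $ j) * cos (kk m \<bullet> y)) + (if i = j then q else 0))"
    unfolding pd_hd[OF hd_P]
    by (simp add: inner_axis inner_axis_axis sum_negf algebra_simps sum_distrib_left axis_neq)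
qed

lemma pd_H: "pd k (\<lambda>y. Hx \<epsilon> \<rho> y i j) = (\<lambda>y. dHx \<epsilon> y k i j)"
proof
  fix y
  have e: "(\<lambda>y. Hx \<epsilon> \<rho> y i j) = (\<lambda>y. (\<Sum>m<3. (\<epsilon> * (kk m $ i * kk m $ j)) * cos (kk m \<bullet> y)) + (if i = j then \<rho> else 0))"
    by (simp add: Hx_def cc_def)
  show "pd k (\<lambda>y. Hx \<epsilon> \<rho> y i j) y = dHx \<epsilon> y k i j"
    unfolding e pd_hd[OF hd_H]
    by (simp add: dHx_def ss_def inner_axis sum_negf algebra_simps)
qed


lemma exp_t_le3: "\<bar>t\<bar> \<le> 1 \<Longrightarrow> exp t \<le> (3::real)"
proof -
  assume "\<bar>t\<bar> \<le> 1"
  then have "exp t \<le> exp 1" by simp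
  also have "\<dots> \<le> 3" using exp_le by simp
  finally show ?thesis .
qed

lemma tay1: "\<bar>u::real\<bar> \<le> 1 \<Longrightarrow> \<bar>exp u - 1\<bar> \<le> 3 * \<bar>u\<bar>"
proof -
  assume u: "\<bar>u\<bar> \<le> 1"
  obtain t where t: "\<bar>t\<bar> \<le> \<bar>u\<bar>" "exp u = (\<Sum>m<1. u ^ m / fact m) + exp t / fact 1 * u ^ 1"
    using Maclaurin_exp_le[of u 1] by blast
  have "exp t \<le> 3" using t(1) u by (intro exp_t_le3) simp
  then have "\<bar>exp t * u\<bar> \<le> 3 * \<bar>u\<bar>" by (simp add: abs_mult mult_right_mono)
  then show ?thesis using t(2) by simp
qed

lemma tay2: "\<bar>u::real\<bar> \<le> 1 \<Longrightarrow> \<bar>exp u - 1 - u\<bar> \<le> 2 * u\<^sup>2"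
proof -
  assume u: "\<bar>u\<bar> \<le> 1"
  obtain t where t: "\<bar>t\<bar> \<le> \<bar>u\<bar>" "exp u = (\<Sum>m<2. u ^ m / fact m) + exp t / fact 2 * u ^ 2"
    using Maclaurin_exp_le[of u 2] by blast
  have "exp t \<le> 3" using t(1) u by (intro exp_t_le3) simp
  then have "exp t / 2 * u\<^sup>2 \<le> 2 * u\<^sup>2" by (intro mult_right_mono) auto
  then have "\<bar>exp t / 2 * u\<^sup>2\<bar> \<le> 2 * u\<^sup>2" by (simp add: abs_mult)
  then show ?thesis using t(2) by (simp add: numeral_2_eq_2)
qed

lemma tay3: "\<bar>u::real\<bar> \<le> 1 \<Longrightarrow> \<bar>exp u - 1 - u - u\<^sup>2 / 2\<bar> \<le> \<bar>u\<bar>^3"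
proof -
  assume u: "\<bar>u\<bar> \<le> 1"
  obtain t where t: "\<bar>t\<bar> \<le> \<bar>u\<bar>" "exp u = (\<Sum>m<3. u ^ m / fact m) + exp t / fact 3 * u ^ 3"
    using Maclaurin_exp_le[of u 3] by blast
  have "exp t \<le> 3" using t(1) u by (intro exp_t_le3) simp
  then have "exp t / 6 * \<bar>u\<bar>^3 \<le> 1 * \<bar>u\<bar>^3" by (intro mult_right_mono) auto
  then have "\<bar>exp t / 6 * u^3\<bar> \<le> \<bar>u\<bar>^3" by (simp add: abs_mult power_abs)
  moreover have "(\<Sum>m<3. u ^ m / fact m) = 1 + u + u\<^sup>2 / 2"
    by (simp add: sum3 power2_eq_square)
  moreover have "fact 3 = (6::real)" by (simp add: fact_numeral)
  ultimately show ?thesis using t(2) by simp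
qed

lemma bm_exp[intro]: "bm h \<Longrightarrow> bm (\<lambda>x. exp (h x))"
  unfolding bm_def
proof (elim conjE exE, intro conjI)
  fix B assume m: "h \<in> borel_measurable lborel" and b: "\<forall>x. \<bar>h x\<bar> \<le> B"
  show "(\<lambda>x. exp (h x)) \<in> borel_measurable lborel" using m by measurable
  show "\<exists>B. \<forall>x. \<bar>exp (h x)\<bar> \<le> B"
  proof (intro exI[of _ "exp B"] allI)
    fix x have "h x \<le> B" using b abs_le_D1 by blast
    then show "\<bar>exp (h x)\<bar> \<le> exp B" by simp
  qed
qed

lemma bm_PHI[intro]: "bm PHI"
proof -
  have e: "PHI = (\<lambda>x. \<Sum>i<3. cc i x)" by (rule ext) (simp add: PHI_def)
  show ?thesis unfolding e by (intro bm_sum bm_mult bm_cc bm_ss bm_const)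
qed
lemma bm_TA2[intro]: "bm TA2"
proof -
  have e: "TA2 = (\<lambda>x. \<Sum>i<3. \<Sum>j<3. (gg i j)\<^sup>2 * (cc i x * cc j x))" by (rule ext) (simp add: TA2_def)
  show ?thesis unfolding e by (intro bm_sum bm_mult bm_cc bm_ss bm_const)
qed
lemma bm_DA2[intro]: "bm DA2"
proof -
  have e: "DA2 = (\<lambda>x. \<Sum>i<3. \<Sum>j<3. (gg i j)^3 * (ss i x * ss j x))" by (rule ext) (simp add: DA2_def)
  show ?thesis unfolding e by (intro bm_sum bm_mult bm_cc bm_ss bm_const)
qed
lemma bm_TA3[intro]: "bm TA3"
proof -
  have e: "TA3 = (\<lambda>x. \<Sum>i<3. \<Sum>j<3. \<Sum>l<3. (gg i j * gg j l * gg l i) * (cc i x * cc j x * cc l x))"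
    by (rule ext) (simp add: TA3_def)
  show ?thesis unfolding e by (intro bm_sum bm_mult bm_cc bm_ss bm_const)
qed

lemma abs_cc: "\<bar>cc i x\<bar> \<le> 1" by (simp add: cc_def)
lemma abs_ss: "\<bar>ss i x\<bar> \<le> 1" by (simp add: ss_def)
lemma lt3: "i < 3 \<Longrightarrow> i = 0 \<or> i = 1 \<or> i = (2::nat)" by auto

lemma abs_gg: "i < 3 \<Longrightarrow> j < 3 \<Longrightarrow> \<bar>gg i j\<bar> \<le> 1"
  using lt3[of i] lt3[of j] by auto

lemma abs_prod_le1: "\<bar>a\<bar> \<le> 1 \<Longrightarrow> \<bar>b\<bar> \<le> 1 \<Longrightarrow> \<bar>a * b\<bar> \<le> (1::real)"
  by (simp add: abs_mult mult_le_one)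

lemma sum_le_card: "(\<And>i. i < (3::nat) \<Longrightarrow> \<bar>f i\<bar> \<le> (B::real)) \<Longrightarrow> \<bar>\<Sum>i<3. f i\<bar> \<le> 3 * B"
proof -
  assume a: "\<And>i. i < 3 \<Longrightarrow> \<bar>f i\<bar> \<le> B"
  have "\<bar>\<Sum>i<3. f i\<bar> \<le> (\<Sum>i<3. \<bar>f i\<bar>)" by (rule sum_abs)
  also have "\<dots> \<le> (\<Sum>i<(3::nat). B)" by (rule sum_mono) (use a in auto)
  finally show ?thesis by simp
qed

lemma abs_PHI: "\<bar>PHI x\<bar> \<le> 3"
  unfolding PHI_def using sum_le_card[of "\<lambda>i. cc i x" 1] abs_cc by simp

lemma sum2_le: fixes f :: "nat \<Rightarrow> nat \<Rightarrow> real" shows "(\<And>i j. i < 3 \<Longrightarrow> j < 3 \<Longrightarrow> \<bar>f i j\<bar> \<le> 1) \<Longrightarrow> \<bar>\<Sum>i<3. \<Sum>j<(3::nat). f i j\<bar> \<le> (9::real)"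
proof -
  assume a: "\<And>i j. i < 3 \<Longrightarrow> j < 3 \<Longrightarrow> \<bar>f i j\<bar> \<le> 1"
  have "\<bar>\<Sum>j<3. f i j\<bar> \<le> 3 * 1" if "i < 3" for i
    by (rule sum_le_card) (rule a[OF that])
  then have "\<bar>\<Sum>i<3. \<Sum>j<(3::nat). f i j\<bar> \<le> 3 * (3 * 1)"
    by (rule sum_le_card)
  then show ?thesis by simp
qed

lemma sum3_le: fixes f :: "nat \<Rightarrow> nat \<Rightarrow> nat \<Rightarrow> real" shows "(\<And>i j l. i < 3 \<Longrightarrow> j < 3 \<Longrightarrow> l < 3 \<Longrightarrow> \<bar>f i j l\<bar> \<le> 1) \<Longrightarrow>
   \<bar>\<Sum>i<3. \<Sum>j<3. \<Sum>l<(3::nat). f i j l\<bar> \<le> (27::real)"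
proof -
  assume a: "\<And>i j l. i < 3 \<Longrightarrow> j < 3 \<Longrightarrow> l < 3 \<Longrightarrow> \<bar>f i j l\<bar> \<le> 1"
  have "\<bar>\<Sum>j<3. \<Sum>l<(3::nat). f i j l\<bar> \<le> 9" if "i < 3" for i
    by (rule sum2_le) (rule a[OF that])
  then have "\<bar>\<Sum>i<3. \<Sum>j<3. \<Sum>l<(3::nat). f i j l\<bar> \<le> 3 * 9"
    by (rule sum_le_card)
  then show ?thesis by simp
qed

lemma abs_TA2: "\<bar>TA2 x\<bar> \<le> 9"
  unfolding TA2_def power2_eq_square
  by (rule sum2_le) (intro abs_prod_le1 abs_gg abs_cc; assumption)

lemma abs_DA2: "\<bar>DA2 x\<bar> \<le> 9"
  unfolding DA2_def power3_eq_cube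
  by (rule sum2_le) (intro abs_prod_le1 abs_gg abs_ss; assumption)

lemma abs_TA3: "\<bar>TA3 x\<bar> \<le> 27"
  unfolding TA3_def
  by (rule sum3_le) (intro abs_prod_le1 abs_gg abs_cc; assumption)


definition ee :: "real \<Rightarrow> real^2 \<Rightarrow> real" where "ee \<epsilon> x = exp (\<epsilon> * PHI x)"

lemma bm_ee[intro]: "bm (ee \<epsilon>)"
proof -
  have e: "ee \<epsilon> = (\<lambda>x. exp (\<epsilon> * PHI x))" by (rule ext) (simp add: ee_def)
  show ?thesis unfolding e by (intro bm_exp bm_mult bm_const bm_PHI)
qed

lemma phi_PHI: "phi_hex x = PHI x"
  by (simp add: phi_hex_def PHI_def sum3 cc_def)

lemma exp_split: "exp (\<epsilon> * phi_hex x - (norm x)\<^sup>2 / (2 * R\<^sup>2)) = ee \<epsilon> x * Gs R x"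
proof -
  have "\<epsilon> * phi_hex x - (norm x)\<^sup>2 / (2 * R\<^sup>2) = \<epsilon> * PHI x + (- (norm x)\<^sup>2 / (2 * R\<^sup>2))"
    by (simp add: phi_PHI)
  then show ?thesis by (simp only: exp_add ee_def Gs_def)
qed

lemma EE_nonneg: "R > 0 \<Longrightarrow> (\<And>x. h x \<ge> 0) \<Longrightarrow> EE R h \<ge> 0"
proof -
  assume R: "R > 0" and h: "\<And>x. h x \<ge> 0"
  have "0 \<le> (\<integral>x. h x * Gs R x \<partial>lborel)"
    by (rule Bochner_Integration.integral_nonneg) (use h Gs_pos[of R] in \<open>simp add: less_imp_le\<close>)
  then show ?thesis unfolding EE_def using R by simp
qed

lemma EE_mono: "R > 0 \<Longrightarrow> bm f \<Longrightarrow> bm g \<Longrightarrow> (\<And>x. f x \<le> g x) \<Longrightarrow> EE R f \<le> EE R g"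
  using EE_nonneg[of R "\<lambda>x. g x - f x"] EE_diff[of R g f] by simp

lemma EE_ee_pos: "R > 0 \<Longrightarrow> EE R (ee \<epsilon>) \<ge> exp (- 3 * \<bar>\<epsilon>\<bar>)"
proof -
  assume R: "R > 0"
  have "EE R (\<lambda>x. exp (- 3 * \<bar>\<epsilon>\<bar>)) \<le> EE R (ee \<epsilon>)"
  proof (rule EE_mono[OF R bm_const bm_ee])
    fix x
    have "\<bar>\<epsilon> * PHI x\<bar> \<le> \<bar>\<epsilon>\<bar> * 3" unfolding abs_mult by (rule mult_left_mono[OF abs_PHI]) simp
    then have "- 3 * \<bar>\<epsilon>\<bar> \<le> \<epsilon> * PHI x" by linarith
    then show "exp (- 3 * \<bar>\<epsilon>\<bar>) \<le> ee \<epsilon> x" by (simp add: ee_def)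
  qed
  moreover have "EE R (\<lambda>x. exp (- 3 * \<bar>\<epsilon>\<bar>)) = exp (- 3 * \<bar>\<epsilon>\<bar>)"
    using EE_cmult[of R "exp (- 3 * \<bar>\<epsilon>\<bar>)" "\<lambda>x. 1"] EE_one[OF R] by simp
  ultimately show ?thesis by simp
qed

lemma Zconst_eq: "R > 0 \<Longrightarrow> Zconst R \<epsilon> = 2*pi*R\<^sup>2 * EE R (ee \<epsilon>)"
  unfolding Zconst_def EE_def exp_split by simp

lemma Zconst_pos: "R > 0 \<Longrightarrow> Zconst R \<epsilon> > 0"
proof -
  assume R: "R > 0"
  have "EE R (ee \<epsilon>) > 0" using EE_ee_pos[OF R, of \<epsilon>] by (meson exp_gt_zero less_le_trans)
  then show ?thesis using R by (simp add: Zconst_eq)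
qed

lemma Fdens_eq: "Fdens R \<epsilon> x = ee \<epsilon> x * Gs R x / Zconst R \<epsilon>"
  unfolding Fdens_def exp_split ..

lemma ln_F:
  assumes R: "R > 0"
  shows "(\<lambda>y. ln (Fdens R \<epsilon> y)) = (\<lambda>y. \<epsilon> * (\<Sum>m<3. cos (kk m \<bullet> y)) - (1/(2*R\<^sup>2)) * (y \<bullet> y) - ln (Zconst R \<epsilon>))"
proof
  fix y
  have Z: "Zconst R \<epsilon> > 0" by (rule Zconst_pos[OF R])
  have "ln (Fdens R \<epsilon> y) = (\<epsilon> * phi_hex y - (norm y)\<^sup>2 / (2 * R\<^sup>2)) - ln (Zconst R \<epsilon>)"
    unfolding Fdens_def using Z by (simp add: ln_divide_pos)
  then show "ln (Fdens R \<epsilon> y) = \<epsilon> * (\<Sum>m<3. cos (kk m \<bullet> y)) - (1/(2*R\<^sup>2)) * (y \<bullet> y) - ln (Zconst R \<epsilon>)"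
    by (simp add: phi_PHI PHI_def cc_def power2_norm_eq_inner)
qed

lemma Hf_eq:
  assumes R: "R > 0"
  shows "Hf (Fdens R \<epsilon>) i j = (\<lambda>y. Hx \<epsilon> (1/R\<^sup>2) y i j)"
proof
  fix y
  have "Hf (Fdens R \<epsilon>) i j y = - pd i (pd j (\<lambda>y. ln (Fdens R \<epsilon> y))) y"
    by (simp add: Hf_def)
  also have "\<dots> = - pd i (\<lambda>y. (\<Sum>m<3. (- \<epsilon> * kk m $ j) * sin (kk m \<bullet> y)) - (2*(1/(2*R\<^sup>2))) * (y \<bullet> axis j 1)) y"
    unfolding ln_F[OF R] pd_L ..
  also have "\<dots> = (\<Sum>m<3. \<epsilon> * (kk m $ i * kk m $ j) * cos (kk m \<bullet> y)) + (if i = j then 2*(1/(2*R\<^sup>2)) else 0)"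
    unfolding pd_P by simp
  also have "\<dots> = Hx \<epsilon> (1/R\<^sup>2) y i j"
    by (simp add: Hx_def cc_def)
  finally show "Hf (Fdens R \<epsilon>) i j y = Hx \<epsilon> (1/R\<^sup>2) y i j" .
qed

lemma pdHf_eq: "R > 0 \<Longrightarrow> pd k (Hf (Fdens R \<epsilon>) i j) = (\<lambda>y. dHx \<epsilon> y k i j)"
  by (simp add: Hf_eq pd_H)

lemma integral_F:
  assumes R: "R > 0"
  shows "(\<integral>x. g x * Fdens R \<epsilon> x \<partial>lborel) = (2*pi*R\<^sup>2 / Zconst R \<epsilon>) * EE R (\<lambda>x. g x * ee \<epsilon> x)"
proof -
  have "(\<integral>x. g x * Fdens R \<epsilon> x \<partial>lborel) = (\<integral>x. (g x * ee \<epsilon> x) * Gs R x / Zconst R \<epsilon> \<partial>lborel)"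
    by (simp add: Fdens_eq mult.assoc)
  also have "\<dots> = (\<integral>x. (g x * ee \<epsilon> x) * Gs R x \<partial>lborel) / Zconst R \<epsilon>" by simp
  also have "\<dots> = (2*pi*R\<^sup>2 / Zconst R \<epsilon>) * EE R (\<lambda>x. g x * ee \<epsilon> x)"
    unfolding EE_def using R by simp
  finally show ?thesis .
qed


lemma Ifun_eq: "R > 0 \<Longrightarrow> Ifun (Fdens R \<epsilon>) = (2*pi*R\<^sup>2 / Zconst R \<epsilon>) * EE R (\<lambda>x. (\<epsilon> * PHI x + 2 * (1/R\<^sup>2)) * ee \<epsilon> x)"
  unfolding Ifun_def by (simp add: Hf_eq I_id integral_F)

lemma Qfun_eq: "R > 0 \<Longrightarrow> Qfun (Fdens R \<epsilon>) = (2*pi*R\<^sup>2 / Zconst R \<epsilon>) *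
   EE R (\<lambda>x. (\<epsilon>\<^sup>2 * TA2 x + 2*\<epsilon>*(1/R\<^sup>2) * PHI x + 2*(1/R\<^sup>2)\<^sup>2) * ee \<epsilon> x)"
  unfolding Qfun_def by (simp only: Hf_eq Q_id integral_F)

lemma Dfun_eq: "R > 0 \<Longrightarrow> Dfun (Fdens R \<epsilon>) = (2*pi*R\<^sup>2 / Zconst R \<epsilon>) *
   EE R (\<lambda>x. (\<epsilon>\<^sup>2 * DA2 x + 2 * (\<epsilon>^3 * TA3 x + 3*\<epsilon>\<^sup>2*(1/R\<^sup>2) * TA2 x + 3*\<epsilon>*(1/R\<^sup>2)\<^sup>2 * PHI x + 2*(1/R\<^sup>2)^3)) * ee \<epsilon> x)"
  unfolding Dfun_def by (simp only: pdHf_eq Hf_eq pd_H D1_id D2_id integral_F)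


lemma amul: "\<bar>x\<bar> \<le> A \<Longrightarrow> \<bar>y\<bar> \<le> B \<Longrightarrow> \<bar>x * y\<bar> \<le> A * (B::real)"
  unfolding abs_mult by (rule mult_mono) (auto intro: order_trans[OF abs_ge_zero])

lemma core_T:
  fixes e a b v :: real
  assumes e: "0 < e" "e \<le> 1/100000"
    and ha: "\<bar>a - (3/2 + 3*e/4)\<bar> \<le> 100*e\<^sup>2"
    and hb: "\<bar>b - (3/2 - 3*e/16)\<bar> \<le> 800*e\<^sup>2"
    and hv: "\<bar>v - (3/2 + 3*e/8)\<bar> \<le> 200*e\<^sup>2"
  shows "a * b - v\<^sup>2 \<le> - e / 4"
proof -
  define a0 b0 v0 where "a0 = 3/2 + 3*e/4" and "b0 = 3/2 - 3*e/16" and "v0 = 3/2 + 3*e/8"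
  have e2: "e\<^sup>2 \<le> e / 100000" using e by (simp add: power2_eq_square mult_left_mono)
  have ea0: "\<bar>a0\<bar> \<le> 2" using e unfolding a0_def by simp
  have eb: "\<bar>b\<bar> \<le> 2" using hb e e2 unfolding b0_def by linarith
  have ev: "\<bar>v + v0\<bar> \<le> 4" using hv e e2 unfolding v0_def by linarith
  have id: "a * b - v\<^sup>2 = (a0 * b0 - v0\<^sup>2) + a0 * (b - b0) + b * (a - a0) - (v - v0) * (v + v0)"
    by (simp add: algebra_simps power2_eq_square)
  have m: "a0 * b0 - v0\<^sup>2 \<le> - 9 * e / 32"
    unfolding a0_def b0_def v0_def using e by (simp add: power2_eq_square algebra_simps)
  have t1: "\<bar>a0 * (b - b0)\<bar> \<le> 2 * (800*e\<^sup>2)" using amul[OF ea0 hb[folded b0_def]] .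
  have t2: "\<bar>b * (a - a0)\<bar> \<le> 2 * (100*e\<^sup>2)" using amul[OF eb ha[folded a0_def]] .
  have t3: "\<bar>(v - v0) * (v + v0)\<bar> \<le> (200*e\<^sup>2) * 4" using amul[OF hv[folded v0_def] ev] .
  have "a * b - v\<^sup>2 \<le> - 9 * e / 32 + 2600 * e\<^sup>2"
    using id m t1 t2 t3 by (smt (verit))
  then show ?thesis using e2 e by linarith
qed

lemma core_N:
  fixes e r X Y V W Z a :: real
  assumes e: "0 < e" "e \<le> 1/100000" and r: "0 < r" "r \<le> e^6"
    and Xa: "X = e * a"
    and T: "a * (Y + 2*e*W) - V\<^sup>2 \<le> - e / 4"
    and bX: "\<bar>X\<bar> \<le> 2" and bY: "\<bar>Y\<bar> \<le> 2" and bV: "\<bar>V\<bar> \<le> 2" and bW: "\<bar>W\<bar> \<le> 2" and bZ: "\<bar>Z\<bar> \<le> 2"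
  shows "(e*X + 2*r*Z) * (e\<^sup>2*Y + 2*e^3*W + 6*e\<^sup>2*r*V + 6*e*r\<^sup>2*X + 4*r^3*Z) - (e\<^sup>2*V + 2*e*r*X + 2*r\<^sup>2*Z)\<^sup>2 < 0"
proof -
  have e1: "\<bar>e\<bar> \<le> 1" "\<bar>e\<^sup>2\<bar> \<le> 1" "\<bar>e^3\<bar> \<le> 1" using e by (auto simp: power_le_one abs_le_iff)
  have r6: "e^6 \<le> 1" using e by (simp add: power_le_one)
  have r1: "\<bar>r\<bar> \<le> 1" "\<bar>r\<^sup>2\<bar> \<le> 1" "\<bar>r^3\<bar> \<le> 1" using r r6 by (auto simp: power_le_one abs_le_iff)
  define D1 where "D1 = 6*e\<^sup>2*V + 6*e*r*X + 4*r\<^sup>2*Z"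
  define D where "D = e\<^sup>2*Y + 2*e^3*W + r * D1"
  define Q1 where "Q1 = 2*e*X + 2*r*Z"
  define Bk where "Bk = e*X*D1 + 2*Z*D - 2*e\<^sup>2*V*Q1 - r*Q1\<^sup>2"
  have id: "(e*X + 2*r*Z) * (e\<^sup>2*Y + 2*e^3*W + 6*e\<^sup>2*r*V + 6*e*r\<^sup>2*X + 4*r^3*Z) - (e\<^sup>2*V + 2*e*r*X + 2*r\<^sup>2*Z)\<^sup>2
     = e^4 * (a * (Y + 2*e*W) - V\<^sup>2) + r * Bk"
    unfolding Bk_def D_def D1_def Q1_def Xa by (simp add: algebra_simps power2_eq_square power3_eq_cube power4_eq_xxxx)
  have bD1: "\<bar>D1\<bar> \<le> 32"
  proof -
    have "\<bar>6*e\<^sup>2*V\<bar> \<le> 12" using amul[OF amul[of 6 6 "e\<^sup>2" 1] bV] e1 by auto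
    moreover have "\<bar>6*e*r*X\<bar> \<le> 12" using amul[OF amul[OF amul[of 6 6 e 1] r1(1)] bX] e1 by auto
    moreover have "\<bar>4*r\<^sup>2*Z\<bar> \<le> 8" using amul[OF amul[of 4 4 "r\<^sup>2" 1] bZ] r1 by auto
    ultimately show ?thesis unfolding D1_def by linarith
  qed
  have bD: "\<bar>D\<bar> \<le> 38"
  proof -
    have "\<bar>e\<^sup>2*Y\<bar> \<le> 2" using amul[OF e1(2) bY] by simp
    moreover have "\<bar>2*e^3*W\<bar> \<le> 4" using amul[OF amul[of 2 2 "e^3" 1] bW] e1 by auto
    moreover have "\<bar>r*D1\<bar> \<le> 32" using amul[OF r1(1) bD1] by simp
    ultimately show ?thesis unfolding D_def by linarith
  qed
  have bQ1: "\<bar>Q1\<bar> \<le> 8"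
  proof -
    have "\<bar>2*e*X\<bar> \<le> 4" using amul[OF amul[of 2 2 e 1] bX] e1 by auto
    moreover have "\<bar>2*r*Z\<bar> \<le> 4" using amul[OF amul[of 2 2 r 1] bZ] r1 by auto
    ultimately show ?thesis unfolding Q1_def by linarith
  qed
  have bBk: "\<bar>Bk\<bar> \<le> 312"
  proof -
    have "\<bar>e*X*D1\<bar> \<le> 64" using amul[OF amul[OF e1(1) bX] bD1] by simp
    moreover have "\<bar>2*Z*D\<bar> \<le> 152" using amul[OF amul[of 2 2 Z 2] bD] bZ by auto
    moreover have "\<bar>2*e\<^sup>2*V*Q1\<bar> \<le> 32" using amul[OF amul[OF amul[of 2 2 "e\<^sup>2" 1] bV] bQ1] e1 by auto
    moreover have "\<bar>r*Q1\<^sup>2\<bar> \<le> 64" using amul[OF r1(1) amul[OF bQ1 bQ1]] by (simp add: power2_eq_square)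
    ultimately show ?thesis unfolding Bk_def by linarith
  qed
  have "r * Bk \<le> e^6 * 312"
  proof -
    have "r * Bk \<le> \<bar>r * Bk\<bar>" by simp
    also have "\<dots> \<le> e^6 * 312" using amul[of r "e^6" Bk 312] r bBk by simp
    finally show ?thesis .
  qed
  moreover have "e^4 * (a * (Y + 2*e*W) - V\<^sup>2) \<le> e^4 * (- e / 4)"
    using mult_left_mono[OF T, of "e^4"] e by simp
  moreover have "e^4 * (- e / 4) + e^6 * 312 < 0"
  proof -
    have "e^6 * 312 = e^5 * (312 * e)" by (simp add: eval_nat_numeral)
    also have "\<dots> < e^5 * (1/4)" using e by (intro mult_strict_left_mono) auto
    moreover have "e^4 * e = e^5" by (simp add: eval_nat_numeral)
    ultimately show ?thesis by simp
  qed
  ultimately show ?thesis unfolding id by linarith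
qed


lemma EE_close:
  assumes R: "R > 0" and f: "bm f" and g: "bm g" and b: "\<And>x. \<bar>f x - g x\<bar> \<le> B"
  shows "\<bar>EE R f - EE R g\<bar> \<le> B"
proof -
  have "bm (\<lambda>x. f x - g x)" using f g by (rule bm_diff)
  then have m: "(\<lambda>x. f x - g x) \<in> borel_measurable lborel" unfolding bm_def by simp
  have "EE R f - EE R g = EE R (\<lambda>x. f x - g x)" using EE_diff[OF R f g] by simp
  also have "\<bar>\<dots>\<bar> \<le> B" by (rule EE_bound[OF R m b])
  finally show ?thesis .
qed

lemma EE_lin2:
  "R > 0 \<Longrightarrow> bm f1 \<Longrightarrow> bm f2 \<Longrightarrow> EE R (\<lambda>x. c1 * f1 x + c2 * f2 x) = c1 * EE R f1 + c2 * EE R f2"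
  by (simp add: EE_add EE_cmult bm_add bm_mult bm_const)

lemma EE_lin3:
  "R > 0 \<Longrightarrow> bm f1 \<Longrightarrow> bm f2 \<Longrightarrow> bm f3 \<Longrightarrow>
   EE R (\<lambda>x. c1 * f1 x + c2 * f2 x + c3 * f3 x) = c1 * EE R f1 + c2 * EE R f2 + c3 * EE R f3"
  by (simp add: EE_add EE_cmult bm_add bm_mult bm_const)

lemma EE_lin5:
  "R > 0 \<Longrightarrow> bm f1 \<Longrightarrow> bm f2 \<Longrightarrow> bm f3 \<Longrightarrow> bm f4 \<Longrightarrow> bm f5 \<Longrightarrow>
   EE R (\<lambda>x. c1 * f1 x + c2 * f2 x + c3 * f3 x + c4 * f4 x + c5 * f5 x)
   = c1 * EE R f1 + c2 * EE R f2 + c3 * EE R f3 + c4 * EE R f4 + c5 * EE R f5"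
  by (simp add: EE_add EE_cmult bm_add bm_mult bm_const)

lemma u_bd: "\<bar>\<epsilon> * PHI x\<bar> \<le> 3 * \<bar>\<epsilon>\<bar>"
  unfolding abs_mult using mult_left_mono[OF abs_PHI[of x], of "\<bar>\<epsilon>\<bar>"] by (simp add: mult.commute)

lemma TX:
  assumes R: "R > 0" and e: "\<bar>\<epsilon>\<bar> \<le> 1/3"
  shows "\<bar>EE R (\<lambda>x. PHI x * ee \<epsilon> x) - (EE R PHI + \<epsilon> * EE R (\<lambda>x. PHI x * PHI x) + \<epsilon>\<^sup>2/2 * EE R (\<lambda>x. PHI x * PHI x * PHI x))\<bar> \<le> 81 * \<bar>\<epsilon>\<bar>^3"
proof -
  let ?g = "\<lambda>x. PHI x + \<epsilon> * (PHI x * PHI x) + \<epsilon>\<^sup>2/2 * (PHI x * PHI x * PHI x)"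
  have "EE R (\<lambda>x. 1 * PHI x + \<epsilon> * (PHI x * PHI x) + \<epsilon>\<^sup>2/2 * (PHI x * PHI x * PHI x)) =
     1 * EE R PHI + \<epsilon> * EE R (\<lambda>x. PHI x * PHI x) + \<epsilon>\<^sup>2/2 * EE R (\<lambda>x. PHI x * PHI x * PHI x)"
    by (rule EE_lin3[OF R]) (intro bm_mult bm_PHI)+
  then have Eg: "EE R ?g = EE R PHI + \<epsilon> * EE R (\<lambda>x. PHI x * PHI x) + \<epsilon>\<^sup>2/2 * EE R (\<lambda>x. PHI x * PHI x * PHI x)"
    by simp
  have "\<bar>EE R (\<lambda>x. PHI x * ee \<epsilon> x) - EE R ?g\<bar> \<le> 81 * \<bar>\<epsilon>\<bar>^3"
  proof (rule EE_close[OF R])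
    show "bm (\<lambda>x. PHI x * ee \<epsilon> x)" by (intro bm_mult bm_PHI bm_ee)
    show "bm ?g" by (intro bm_add bm_mult bm_PHI bm_const)
    fix x
    let ?u = "\<epsilon> * PHI x"
    have u: "\<bar>?u\<bar> \<le> 3 * \<bar>\<epsilon>\<bar>" by (rule u_bd)
    then have u1: "\<bar>?u\<bar> \<le> 1" using e by linarith
    have id: "PHI x * ee \<epsilon> x - ?g x = PHI x * (exp ?u - 1 - ?u - ?u\<^sup>2/2)"
      by (simp add: ee_def algebra_simps power2_eq_square)
    have "\<bar>PHI x * (exp ?u - 1 - ?u - ?u\<^sup>2/2)\<bar> \<le> 3 * \<bar>?u\<bar>^3"
      using amul[OF abs_PHI tay3[OF u1]] .
    also have "\<dots> \<le> 3 * (3 * \<bar>\<epsilon>\<bar>)^3"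
      using power_mono[OF u, of 3] by simp
    finally show "\<bar>PHI x * ee \<epsilon> x - ?g x\<bar> \<le> 81 * \<bar>\<epsilon>\<bar>^3" unfolding id by (simp add: power_mult_distrib)
  qed
  then show ?thesis unfolding Eg .
qed

lemma T2gen:
  assumes R: "R > 0" and e: "\<bar>\<epsilon>\<bar> \<le> 1/3" and G: "bm G" and Gb: "\<And>x. \<bar>G x\<bar> \<le> 9"
  shows "\<bar>EE R (\<lambda>x. G x * ee \<epsilon> x) - (EE R G + \<epsilon> * EE R (\<lambda>x. G x * PHI x))\<bar> \<le> 162 * \<epsilon>\<^sup>2"
proof -
  let ?g = "\<lambda>x. G x + \<epsilon> * (G x * PHI x)"
  have "EE R (\<lambda>x. 1 * G x + \<epsilon> * (G x * PHI x)) = 1 * EE R G + \<epsilon> * EE R (\<lambda>x. G x * PHI x)"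
    by (rule EE_lin2[OF R G]) (intro bm_mult G bm_PHI)
  then have Eg: "EE R ?g = EE R G + \<epsilon> * EE R (\<lambda>x. G x * PHI x)"
    by simp
  have "\<bar>EE R (\<lambda>x. G x * ee \<epsilon> x) - EE R ?g\<bar> \<le> 162 * \<epsilon>\<^sup>2"
  proof (rule EE_close[OF R])
    show "bm (\<lambda>x. G x * ee \<epsilon> x)" using G by (intro bm_mult bm_ee)
    show "bm ?g" using G by (intro bm_add bm_mult bm_PHI bm_const)
    fix x
    let ?u = "\<epsilon> * PHI x"
    have u: "\<bar>?u\<bar> \<le> 3 * \<bar>\<epsilon>\<bar>" by (rule u_bd)
    then have u1: "\<bar>?u\<bar> \<le> 1" using e by linarith
    have id: "G x * ee \<epsilon> x - ?g x = G x * (exp ?u - 1 - ?u)"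
      by (simp add: ee_def algebra_simps)
    have "\<bar>G x * (exp ?u - 1 - ?u)\<bar> \<le> 9 * (2 * ?u\<^sup>2)"
      using amul[OF Gb tay2[OF u1]] .
    also have "\<dots> \<le> 9 * (2 * (3 * \<bar>\<epsilon>\<bar>)\<^sup>2)"
      using power_mono[OF u, of 2] by simp
    finally show "\<bar>G x * ee \<epsilon> x - ?g x\<bar> \<le> 162 * \<epsilon>\<^sup>2" unfolding id by (simp add: power_mult_distrib)
  qed
  then show ?thesis unfolding Eg .
qed

lemma T1gen:
  assumes R: "R > 0" and e: "\<bar>\<epsilon>\<bar> \<le> 1/3" and G: "bm G" and Gb: "\<And>x. \<bar>G x\<bar> \<le> 27"
  shows "\<bar>EE R (\<lambda>x. G x * ee \<epsilon> x) - EE R G\<bar> \<le> 243 * \<bar>\<epsilon>\<bar>"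
proof (rule EE_close[OF R])
  show "bm (\<lambda>x. G x * ee \<epsilon> x)" using G by (intro bm_mult bm_ee)
  show "bm G" by (rule G)
  fix x
  let ?u = "\<epsilon> * PHI x"
  have u: "\<bar>?u\<bar> \<le> 3 * \<bar>\<epsilon>\<bar>" by (rule u_bd)
  then have u1: "\<bar>?u\<bar> \<le> 1" using e by linarith
  have id: "G x * ee \<epsilon> x - G x = G x * (exp ?u - 1)"
    by (simp add: ee_def algebra_simps)
  have "\<bar>G x * (exp ?u - 1)\<bar> \<le> 27 * (3 * \<bar>?u\<bar>)"
    using amul[OF Gb tay1[OF u1]] .
  also have "\<dots> \<le> 27 * (3 * (3 * \<bar>\<epsilon>\<bar>))"
    using u by simp
  finally show "\<bar>G x * ee \<epsilon> x - G x\<bar> \<le> 243 * \<bar>\<epsilon>\<bar>" unfolding id by simp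
qed

lemma TZ:
  assumes R: "R > 0" and e: "\<bar>\<epsilon>\<bar> \<le> 1/3"
  shows "\<bar>EE R (ee \<epsilon>) - 1\<bar> \<le> 243 * \<bar>\<epsilon>\<bar>"
proof -
  have "\<bar>EE R (\<lambda>x. 1 * ee \<epsilon> x) - EE R (\<lambda>x. 1)\<bar> \<le> 243 * \<bar>\<epsilon>\<bar>"
    by (rule T1gen[OF R e bm_const]) simp
  then show ?thesis using EE_one[OF R] by simp
qed

lemma bm_Pee[intro]: "bm (\<lambda>x. PHI x * ee \<epsilon> x)" by (intro bm_mult bm_PHI bm_ee)
lemma bm_T2ee[intro]: "bm (\<lambda>x. TA2 x * ee \<epsilon> x)" by (intro bm_mult bm_TA2 bm_ee)
lemma bm_D2ee[intro]: "bm (\<lambda>x. DA2 x * ee \<epsilon> x)" by (intro bm_mult bm_DA2 bm_ee)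
lemma bm_T3ee[intro]: "bm (\<lambda>x. TA3 x * ee \<epsilon> x)" by (intro bm_mult bm_TA3 bm_ee)

lemma EI:
  assumes R: "R > 0"
  shows "EE R (\<lambda>x. (\<epsilon> * PHI x + 2 * (1/R\<^sup>2)) * ee \<epsilon> x) = \<epsilon> * EE R (\<lambda>x. PHI x * ee \<epsilon> x) + 2 * (1/R\<^sup>2) * EE R (ee \<epsilon>)"
proof -
  have e: "(\<lambda>x. (\<epsilon> * PHI x + 2 * (1/R\<^sup>2)) * ee \<epsilon> x) = (\<lambda>x. \<epsilon> * (PHI x * ee \<epsilon> x) + (2 * (1/R\<^sup>2)) * ee \<epsilon> x)"
    by (rule ext) (simp add: algebra_simps)
  show ?thesis unfolding e by (rule EE_lin2[OF R bm_Pee bm_ee])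
qed

lemma EQ:
  assumes R: "R > 0"
  shows "EE R (\<lambda>x. (\<epsilon>\<^sup>2 * TA2 x + 2*\<epsilon>*(1/R\<^sup>2) * PHI x + 2*(1/R\<^sup>2)\<^sup>2) * ee \<epsilon> x)
     = \<epsilon>\<^sup>2 * EE R (\<lambda>x. TA2 x * ee \<epsilon> x) + 2*\<epsilon>*(1/R\<^sup>2) * EE R (\<lambda>x. PHI x * ee \<epsilon> x) + 2*(1/R\<^sup>2)\<^sup>2 * EE R (ee \<epsilon>)"
proof -
  have e: "(\<lambda>x. (\<epsilon>\<^sup>2 * TA2 x + 2*\<epsilon>*(1/R\<^sup>2) * PHI x + 2*(1/R\<^sup>2)\<^sup>2) * ee \<epsilon> x)
     = (\<lambda>x. \<epsilon>\<^sup>2 * (TA2 x * ee \<epsilon> x) + (2*\<epsilon>*(1/R\<^sup>2)) * (PHI x * ee \<epsilon> x) + (2*(1/R\<^sup>2)\<^sup>2) * ee \<epsilon> x)"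
    by (rule ext) (simp add: algebra_simps)
  show ?thesis unfolding e by (rule EE_lin3[OF R bm_T2ee bm_Pee bm_ee])
qed

lemma ED:
  assumes R: "R > 0"
  shows "EE R (\<lambda>x. (\<epsilon>\<^sup>2 * DA2 x + 2 * (\<epsilon>^3 * TA3 x + 3*\<epsilon>\<^sup>2*(1/R\<^sup>2) * TA2 x + 3*\<epsilon>*(1/R\<^sup>2)\<^sup>2 * PHI x + 2*(1/R\<^sup>2)^3)) * ee \<epsilon> x)
     = \<epsilon>\<^sup>2 * EE R (\<lambda>x. DA2 x * ee \<epsilon> x) + 2*\<epsilon>^3 * EE R (\<lambda>x. TA3 x * ee \<epsilon> x)
       + 6*\<epsilon>\<^sup>2*(1/R\<^sup>2) * EE R (\<lambda>x. TA2 x * ee \<epsilon> x) + 6*\<epsilon>*(1/R\<^sup>2)\<^sup>2 * EE R (\<lambda>x. PHI x * ee \<epsilon> x)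
       + 4*(1/R\<^sup>2)^3 * EE R (ee \<epsilon>)"
proof -
  have e: "(\<lambda>x. (\<epsilon>\<^sup>2 * DA2 x + 2 * (\<epsilon>^3 * TA3 x + 3*\<epsilon>\<^sup>2*(1/R\<^sup>2) * TA2 x + 3*\<epsilon>*(1/R\<^sup>2)\<^sup>2 * PHI x + 2*(1/R\<^sup>2)^3)) * ee \<epsilon> x)
     = (\<lambda>x. \<epsilon>\<^sup>2 * (DA2 x * ee \<epsilon> x) + (2*\<epsilon>^3) * (TA3 x * ee \<epsilon> x)
       + (6*\<epsilon>\<^sup>2*(1/R\<^sup>2)) * (TA2 x * ee \<epsilon> x) + (6*\<epsilon>*(1/R\<^sup>2)\<^sup>2) * (PHI x * ee \<epsilon> x)
       + (4*(1/R\<^sup>2)^3) * ee \<epsilon> x)"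
    by (rule ext) (simp add: algebra_simps)
  show ?thesis unfolding e by (rule EE_lin5[OF R bm_D2ee bm_T3ee bm_T2ee bm_Pee bm_ee])
qed

lemma ev_close:
  assumes "(f \<longlongrightarrow> L) at_top" "0 < (d::real)"
  shows "eventually (\<lambda>R. \<bar>f R - L\<bar> \<le> d) (at_top :: real filter)"
proof -
  have "eventually (\<lambda>R. dist (f R) L < d) at_top" using assms tendsto_iff by blast
  then show ?thesis by eventually_elim (simp add: dist_real_def)
qed


lemma comb4: "\<bar>x - s\<bar> \<le> a \<Longrightarrow> \<bar>p\<bar> \<le> b \<Longrightarrow> \<bar>q\<bar> \<le> c \<Longrightarrow> \<bar>r\<bar> \<le> d \<Longrightarrow> x - t = (x - s) + p + q + r
  \<Longrightarrow> \<bar>x - t\<bar> \<le> a + b + c + (d::real)"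
  by arith

lemma comb3: "\<bar>x - s\<bar> \<le> a \<Longrightarrow> \<bar>p\<bar> \<le> b \<Longrightarrow> \<bar>q\<bar> \<le> c \<Longrightarrow> x - t = (x - s) + p + q
  \<Longrightarrow> \<bar>x - t\<bar> \<le> a + b + (c::real)"
  by arith

lemma rho_lim: "((\<lambda>R::real. 1 / R\<^sup>2) \<longlongrightarrow> 0) at_top"
  by real_asymp

lemma main_eps:
  fixes \<epsilon> :: real
  assumes e: "0 < \<epsilon>" "\<epsilon> < 1/100000"
  shows "\<exists>R0. \<forall>R. R \<ge> R0 \<and> R > 0 \<longrightarrow>
              Ifun (Fdens R \<epsilon>) * Dfun (Fdens R \<epsilon>) - (Qfun (Fdens R \<epsilon>))\<^sup>2 < 0"
proof -
  have p: "\<epsilon>^6 > 0" "\<epsilon>^3 > 0" "\<epsilon>\<^sup>2 > 0" using e by auto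
  have "eventually (\<lambda>R. R > 0 \<and> \<bar>1/R\<^sup>2 - 0\<bar> \<le> \<epsilon>^6 \<and> \<bar>EE R PHI - 0\<bar> \<le> \<epsilon>^3
      \<and> \<bar>EE R (\<lambda>x. PHI x * PHI x) - 3/2\<bar> \<le> \<epsilon>\<^sup>2 \<and> \<bar>EE R (\<lambda>x. PHI x * PHI x * PHI x) - 3/2\<bar> \<le> \<epsilon>
      \<and> \<bar>EE R DA2 - 3/2\<bar> \<le> \<epsilon>\<^sup>2 \<and> \<bar>EE R (\<lambda>x. DA2 x * PHI x) - 3/16\<bar> \<le> \<epsilon>
      \<and> \<bar>EE R TA2 - 3/2\<bar> \<le> \<epsilon>\<^sup>2 \<and> \<bar>EE R (\<lambda>x. TA2 x * PHI x) - 3/8\<bar> \<le> \<epsilon>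
      \<and> \<bar>EE R TA3 - (-3/16)\<bar> \<le> \<epsilon>) at_top"
    using eventually_gt_at_top[of 0] ev_close[OF rho_lim p(1)] ev_close[OF lim_PHI p(2)]
      ev_close[OF lim_PHI2 p(3)] ev_close[OF lim_PHI3 e(1)] ev_close[OF lim_DA2 p(3)]
      ev_close[OF lim_DA2PHI e(1)] ev_close[OF lim_TA2 p(3)] ev_close[OF lim_TA2PHI e(1)]
      ev_close[OF lim_TA3 e(1)]
    by eventually_elim blast
  then obtain R0 where R0: "\<And>R. R \<ge> R0 \<Longrightarrow> R > 0 \<and> \<bar>1/R\<^sup>2 - 0\<bar> \<le> \<epsilon>^6 \<and> \<bar>EE R PHI - 0\<bar> \<le> \<epsilon>^3
      \<and> \<bar>EE R (\<lambda>x. PHI x * PHI x) - 3/2\<bar> \<le> \<epsilon>\<^sup>2 \<and> \<bar>EE R (\<lambda>x. PHI x * PHI x * PHI x) - 3/2\<bar> \<le> \<epsilon>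
      \<and> \<bar>EE R DA2 - 3/2\<bar> \<le> \<epsilon>\<^sup>2 \<and> \<bar>EE R (\<lambda>x. DA2 x * PHI x) - 3/16\<bar> \<le> \<epsilon>
      \<and> \<bar>EE R TA2 - 3/2\<bar> \<le> \<epsilon>\<^sup>2 \<and> \<bar>EE R (\<lambda>x. TA2 x * PHI x) - 3/8\<bar> \<le> \<epsilon>
      \<and> \<bar>EE R TA3 - (-3/16)\<bar> \<le> \<epsilon>"
    unfolding eventually_at_top_linorder by blast
  show ?thesis
  proof (intro exI[of _ R0] allI impI)
    fix R assume RR: "R \<ge> R0 \<and> R > 0"
    then have R: "R > 0" by simp
    have hh: "\<bar>1/R\<^sup>2 - 0\<bar> \<le> \<epsilon>^6" "\<bar>EE R PHI - 0\<bar> \<le> \<epsilon>^3"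
      "\<bar>EE R (\<lambda>x. PHI x * PHI x) - 3/2\<bar> \<le> \<epsilon>\<^sup>2" "\<bar>EE R (\<lambda>x. PHI x * PHI x * PHI x) - 3/2\<bar> \<le> \<epsilon>"
      "\<bar>EE R DA2 - 3/2\<bar> \<le> \<epsilon>\<^sup>2" "\<bar>EE R (\<lambda>x. DA2 x * PHI x) - 3/16\<bar> \<le> \<epsilon>"
      "\<bar>EE R TA2 - 3/2\<bar> \<le> \<epsilon>\<^sup>2" "\<bar>EE R (\<lambda>x. TA2 x * PHI x) - 3/8\<bar> \<le> \<epsilon>"
      "\<bar>EE R TA3 - (-3/16)\<bar> \<le> \<epsilon>"
      using R0[of R] RR by auto
    define \<rho> where "\<rho> = 1 / R\<^sup>2"
    define X where "X = EE R (\<lambda>x. PHI x * ee \<epsilon> x)"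
    define Z1 where "Z1 = EE R (ee \<epsilon>)"
    define V where "V = EE R (\<lambda>x. TA2 x * ee \<epsilon> x)"
    define Y where "Y = EE R (\<lambda>x. DA2 x * ee \<epsilon> x)"
    define W where "W = EE R (\<lambda>x. TA3 x * ee \<epsilon> x)"
    define c where "c = 2*pi*R\<^sup>2 / Zconst R \<epsilon>"
    have c: "c > 0" unfolding c_def using R Zconst_pos[OF R, of \<epsilon>] by simp
    have rho: "0 < \<rho>" "\<rho> \<le> \<epsilon>^6" using hh(1) R unfolding \<rho>_def by auto
    have eabs: "\<bar>\<epsilon>\<bar> \<le> 1/3" "\<bar>\<epsilon>\<bar> = \<epsilon>" using e by auto
    have e2: "\<epsilon>\<^sup>2 \<le> \<epsilon> / 100000" using e by (simp add: power2_eq_square mult_left_mono)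
    have e3: "\<epsilon>^3 \<le> \<epsilon>\<^sup>2" using e by (simp add: power2_eq_square power3_eq_cube mult_left_le)
    have I: "Ifun (Fdens R \<epsilon>) = c * (\<epsilon> * X + 2 * \<rho> * Z1)"
      unfolding Ifun_eq[OF R] EI[OF R] c_def X_def Z1_def \<rho>_def ..
    have Q: "Qfun (Fdens R \<epsilon>) = c * (\<epsilon>\<^sup>2 * V + 2*\<epsilon>*\<rho> * X + 2*\<rho>\<^sup>2 * Z1)"
      unfolding Qfun_eq[OF R] EQ[OF R] c_def X_def Z1_def V_def \<rho>_def ..
    have D: "Dfun (Fdens R \<epsilon>) = c * (\<epsilon>\<^sup>2 * Y + 2*\<epsilon>^3 * W + 6*\<epsilon>\<^sup>2*\<rho> * V + 6*\<epsilon>*\<rho>\<^sup>2 * X + 4*\<rho>^3 * Z1)"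
      unfolding Dfun_eq[OF R] ED[OF R] c_def X_def Z1_def V_def Y_def W_def \<rho>_def ..
    have tX: "\<bar>X - \<epsilon> * (3/2 + 3*\<epsilon>/4)\<bar> \<le> 81 * \<epsilon>^3 + \<epsilon>^3 + \<epsilon> * \<epsilon>\<^sup>2 + \<epsilon>\<^sup>2/2 * \<epsilon>"
    proof (rule comb4)
      show "\<bar>X - (EE R PHI + \<epsilon> * EE R (\<lambda>x. PHI x * PHI x) + \<epsilon>\<^sup>2/2 * EE R (\<lambda>x. PHI x * PHI x * PHI x))\<bar> \<le> 81 * \<epsilon>^3"
        using TX[OF R eabs(1)] unfolding X_def eabs(2) .
      show "\<bar>EE R PHI\<bar> \<le> \<epsilon>^3" using hh(2) by simp
      show "\<bar>\<epsilon> * (EE R (\<lambda>x. PHI x * PHI x) - 3/2)\<bar> \<le> \<epsilon> * \<epsilon>\<^sup>2" using amul[OF _ hh(3), of \<epsilon> \<epsilon>] eabs by simp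
      show "\<bar>\<epsilon>\<^sup>2/2 * (EE R (\<lambda>x. PHI x * PHI x * PHI x) - 3/2)\<bar> \<le> \<epsilon>\<^sup>2/2 * \<epsilon>" using amul[OF _ hh(4), of "\<epsilon>\<^sup>2/2" "\<epsilon>\<^sup>2/2"] by simp
    qed (simp add: algebra_simps power2_eq_square)
    have tY: "\<bar>Y - (3/2 + 3*\<epsilon>/16)\<bar> \<le> 162 * \<epsilon>\<^sup>2 + \<epsilon>\<^sup>2 + \<epsilon> * \<epsilon>"
    proof (rule comb3)
      show "\<bar>Y - (EE R DA2 + \<epsilon> * EE R (\<lambda>x. DA2 x * PHI x))\<bar> \<le> 162 * \<epsilon>\<^sup>2"
        using T2gen[OF R eabs(1) bm_DA2 abs_DA2] unfolding Y_def .
      show "\<bar>EE R DA2 - 3/2\<bar> \<le> \<epsilon>\<^sup>2" by (rule hh(5))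
      show "\<bar>\<epsilon> * (EE R (\<lambda>x. DA2 x * PHI x) - 3/16)\<bar> \<le> \<epsilon> * \<epsilon>" using amul[OF _ hh(6), of \<epsilon> \<epsilon>] eabs by simp
    qed (simp add: algebra_simps)
    have tV: "\<bar>V - (3/2 + 3*\<epsilon>/8)\<bar> \<le> 162 * \<epsilon>\<^sup>2 + \<epsilon>\<^sup>2 + \<epsilon> * \<epsilon>"
    proof (rule comb3)
      show "\<bar>V - (EE R TA2 + \<epsilon> * EE R (\<lambda>x. TA2 x * PHI x))\<bar> \<le> 162 * \<epsilon>\<^sup>2"
        using T2gen[OF R eabs(1) bm_TA2 abs_TA2] unfolding V_def .
      show "\<bar>EE R TA2 - 3/2\<bar> \<le> \<epsilon>\<^sup>2" by (rule hh(7))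
      show "\<bar>\<epsilon> * (EE R (\<lambda>x. TA2 x * PHI x) - 3/8)\<bar> \<le> \<epsilon> * \<epsilon>" using amul[OF _ hh(8), of \<epsilon> \<epsilon>] eabs by simp
    qed (simp add: algebra_simps)
    have tW: "\<bar>W - (-3/16)\<bar> \<le> 243 * \<epsilon> + \<epsilon>"
      using T1gen[OF R eabs(1) bm_TA3 abs_TA3] hh(9) unfolding W_def eabs(2) by arith
    have tZ: "\<bar>Z1 - 1\<bar> \<le> 243 * \<epsilon>" using TZ[OF R eabs(1)] unfolding Z1_def eabs(2) .
    define a where "a = X / \<epsilon>"
    have Xa: "X = \<epsilon> * a" unfolding a_def using e by simp
    have ha: "\<bar>a - (3/2 + 3*\<epsilon>/4)\<bar> \<le> 100 * \<epsilon>\<^sup>2"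
    proof -
      have p3: "0 \<le> \<epsilon>^3" using e by simp
      have "81 * \<epsilon>^3 + \<epsilon>^3 + \<epsilon> * \<epsilon>\<^sup>2 + \<epsilon>\<^sup>2/2 * \<epsilon> = (167/2) * \<epsilon>^3"
        by (simp add: power2_eq_square power3_eq_cube algebra_simps)
      moreover have "\<epsilon> * (100 * \<epsilon>\<^sup>2) = 100 * \<epsilon>^3" by (simp add: power2_eq_square power3_eq_cube)
      ultimately have "\<bar>X - \<epsilon> * (3/2 + 3*\<epsilon>/4)\<bar> \<le> \<epsilon> * (100 * \<epsilon>\<^sup>2)"
        using tX p3 by linarith
      then have "\<epsilon> * \<bar>a - (3/2 + 3*\<epsilon>/4)\<bar> \<le> \<epsilon> * (100 * \<epsilon>\<^sup>2)"
        unfolding Xa right_diff_distrib[symmetric] abs_mult eabs(2) .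
      then show ?thesis using e by simp
    qed
    have hb: "\<bar>(Y + 2*\<epsilon>*W) - (3/2 - 3*\<epsilon>/16)\<bar> \<le> 800 * \<epsilon>\<^sup>2"
    proof -
      have "\<bar>2*\<epsilon> * (W - (-3/16))\<bar> \<le> 2*\<epsilon> * (244 * \<epsilon>)" using amul[OF _ tW, of "2*\<epsilon>" "2*\<epsilon>"] e by simp
      then show ?thesis using tY by (simp add: power2_eq_square algebra_simps abs_le_iff)
    qed
    have hv: "\<bar>V - (3/2 + 3*\<epsilon>/8)\<bar> \<le> 200 * \<epsilon>\<^sup>2" using tV by (simp add: power2_eq_square)
    have T: "a * (Y + 2*\<epsilon>*W) - V\<^sup>2 \<le> - \<epsilon> / 4"
      by (rule core_T[OF e(1) _ ha hb hv]) (use e in simp)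
    have bX: "\<bar>X\<bar> \<le> 2"
    proof -
      have "\<bar>a\<bar> \<le> 2" using ha e e2 by (simp add: abs_le_iff; linarith?)
      then have "\<epsilon> * \<bar>a\<bar> \<le> 1 * 2" by (intro mult_mono) (use e in auto)
      then show ?thesis unfolding Xa abs_mult eabs(2) by simp
    qed
    have e2': "\<epsilon> * \<epsilon> \<le> \<epsilon> / 100000" using e2 by (simp add: power2_eq_square)
    have "\<bar>Y - (3/2 + 3*\<epsilon>/16)\<bar> \<le> 164 * (\<epsilon> * \<epsilon>)" using tY by (simp add: power2_eq_square)
    then have bY: "\<bar>Y\<bar> \<le> 2" using e e2' by (simp only: abs_le_iff) linarith
    have "\<bar>V - (3/2 + 3*\<epsilon>/8)\<bar> \<le> 164 * (\<epsilon> * \<epsilon>)" using tV by (simp add: power2_eq_square)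
    then have bV: "\<bar>V\<bar> \<le> 2" using e e2' by (simp only: abs_le_iff) linarith
    have bW: "\<bar>W\<bar> \<le> 2" using tW e by (simp add: abs_le_iff; linarith?)
    have bZ: "\<bar>Z1\<bar> \<le> 2" using tZ e by (simp add: abs_le_iff; linarith?)
    have N: "(\<epsilon>*X + 2*\<rho>*Z1) * (\<epsilon>\<^sup>2*Y + 2*\<epsilon>^3*W + 6*\<epsilon>\<^sup>2*\<rho>*V + 6*\<epsilon>*\<rho>\<^sup>2*X + 4*\<rho>^3*Z1) - (\<epsilon>\<^sup>2*V + 2*\<epsilon>*\<rho>*X + 2*\<rho>\<^sup>2*Z1)\<^sup>2 < 0"
      by (rule core_N[OF e(1) _ rho Xa T bX bY bV bW bZ]) (use e in simp)
    have "Ifun (Fdens R \<epsilon>) * Dfun (Fdens R \<epsilon>) - (Qfun (Fdens R \<epsilon>))\<^sup>2 =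
      c\<^sup>2 * ((\<epsilon>*X + 2*\<rho>*Z1) * (\<epsilon>\<^sup>2*Y + 2*\<epsilon>^3*W + 6*\<epsilon>\<^sup>2*\<rho>*V + 6*\<epsilon>*\<rho>\<^sup>2*X + 4*\<rho>^3*Z1) - (\<epsilon>\<^sup>2*V + 2*\<epsilon>*\<rho>*X + 2*\<rho>\<^sup>2*Z1)\<^sup>2)"
      unfolding I Q D by (simp add: algebra_simps power2_eq_square)
    also have "\<dots> < 0" using N c by (simp add: mult_pos_neg)
    finally show "Ifun (Fdens R \<epsilon>) * Dfun (Fdens R \<epsilon>) - (Qfun (Fdens R \<epsilon>))\<^sup>2 < 0" .
  qed
qed

theorem proposition4p2:
  shows "\<exists>\<epsilon>0>0. \<forall>\<epsilon>. 0 < \<epsilon> \<and> \<epsilon> < \<epsilon>0 \<longrightarrow>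
           (\<exists>R0. \<forall>R. R \<ge> R0 \<and> R > 0 \<longrightarrow>
              Ifun (Fdens R \<epsilon>) * Dfun (Fdens R \<epsilon>) - (Qfun (Fdens R \<epsilon>))\<^sup>2 < 0)"
proof (rule exI[of _ "1/100000"], intro conjI allI impI)
  show "(0::real) < 1/100000" by simp
next
  fix \<epsilon> :: real assume "0 < \<epsilon> \<and> \<epsilon> < 1/100000"
  then show "\<exists>R0. \<forall>R. R \<ge> R0 \<and> R > 0 \<longrightarrow>
              Ifun (Fdens R \<epsilon>) * Dfun (Fdens R \<epsilon>) - (Qfun (Fdens R \<epsilon>))\<^sup>2 < 0"
    using main_eps by blast
qed


end
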